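(* Let $X$ be a centered Gaussian process, self-similar of order $\beta\in(0,1)$, satisfying (H.1) and (H.2) with parameters $\alpha,\lambda,\psi,c,\nu$. Let $q$ be a positive integer with $\alpha\le2-\frac1q$. Then for every $T>0$, $$\lim_{\varepsilon\to0}\varphi_{\alpha,q}(\varepsilon)\int_0^{T/\varepsilon}\int_0^{T/\varepsilon}\mathbf{1}_{D_2}(s,t)\,|\Phi(s,t)|^q\,ds\,dt=0,$$ where $D_2=\{(s,t)\in\mathbb{R}_+^2:|s-t|\ge(c-1)(s\wedge t)+c\}$.
   Context: Self-similar of order $\beta$: $(X(ct))_{t\ge0}\overset{law}{=}(c^\beta X(t))_{t\ge0}$ for all $c>0$. $\phi(x)=\mathbb{E}[X(1)X(x)]$, $x\ge1$, so $\mathbb{E}[X(s)X(t)]=s^{2\beta}\phi(t/s)$ for $0<s\le t$. (H.1): there is $\alpha\in(0,2\beta]$ with $\phi(x)=-\lambda(x-1)^\alpha+\psi(x)$, $\lambda>0$, $\psi$ twice differentiable on an open set containing $[1,\infty)$, and $C\ge0$ with, for $x\in(1,\infty)$: $|\psi'(x)|\le Cx^{\alpha-1}$, $|\psi''(x)|\le Cx^{-1}(x-1)^{\alpha-1}$, $\psi'(1)=\beta\psi(1)$ when $\alpha\ge1$. (H.2): there are $C>0$, $c>1$, $1<\nu\le2$ such that for $x\ge c$: $|\phi'(x)|\le Cx^{-\nu}$ if $\alpha<1$, $\le Cx^{\alpha-2}$ if $\alpha\ge1$; $|\phi''(x)|\le Cx^{-\nu-1}$ if $\alpha<1$, $\le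 Cx^{\alpha-3}$ if $\alpha\ge1$. Notation: $\Phi(s,t)=\mathbb{E}[Y_1(s)Y_1(t)]$ with $Y_1(u)=\frac{X(u+1)-X(u)}{\|X(u+1)-X(u)\|_{L^2(\Omega)}}$; $\varphi_{\alpha,q}(\varepsilon)=\varepsilon$ if $\alpha<2-1/q$ and $\varphi_{\alpha,q}(\varepsilon)=\varepsilon/|\log\varepsilon|$ if $\alpha=2-1/q$. *)

theory Defs
  imports "HOL-Probability.Probability"
begin

definition centered_gaussian_rv :: "'a measure \<Rightarrow> ('a \<Rightarrow> real) \<Rightarrow> bool" where
  "centered_gaussian_rv M Z \<longleftrightarrow> Z \<in> borel_measurable M \<and>
     ((AE \<omega> in M. Z \<omega> = 0) \<or> (\<exists>\<sigma>>0. distributed M lborel Z (normal_density 0 \<sigma>)))"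

definition centered_gaussian_process :: "'a measure \<Rightarrow> (real \<Rightarrow> 'a \<Rightarrow> real) \<Rightarrow> bool" where
  "centered_gaussian_process M X \<longleftrightarrow> prob_space M \<and>
     (\<forall>t\<ge>0. X t \<in> borel_measurable M) \<and>
     (\<forall>ts a :: real list. length a = length ts \<longrightarrow> set ts \<subseteq> {0..} \<longrightarrow>
        centered_gaussian_rv M (\<lambda>\<omega>. \<Sum>i<length ts. a ! i * X (ts ! i) \<omega>))"

definition self_similar :: "'a measure \<Rightarrow> (real \<Rightarrow> 'a \<Rightarrow> real) \<Rightarrow> real \<Rightarrow> bool" where
  "self_similar M X \<beta> \<longleftrightarrow> (\<forall>c>0::real.
     distr M (Pi\<^sub>M {0..} (\<lambda>_. borel)) (\<lambda>\<omega>. \<lambda>t\<in>{0..}. X (c * t) \<omega>) =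
     distr M (Pi\<^sub>M {0..} (\<lambda>_. borel)) (\<lambda>\<omega>. \<lambda>t\<in>{0..}. c powr \<beta> * X t \<omega>))"

definition cov_phi :: "'a measure \<Rightarrow> (real \<Rightarrow> 'a \<Rightarrow> real) \<Rightarrow> real \<Rightarrow> real" where
  "cov_phi M X x = (\<integral>\<omega>. X 1 \<omega> * X x \<omega> \<partial>M)"

definition Y1 :: "'a measure \<Rightarrow> (real \<Rightarrow> 'a \<Rightarrow> real) \<Rightarrow> real \<Rightarrow> 'a \<Rightarrow> real" where
  "Y1 M X u \<omega> = (X (u + 1) \<omega> - X u \<omega>) /
       sqrt (\<integral>\<eta>. (X (u + 1) \<eta> - X u \<eta>)\<^sup>2 \<partial>M)"

definition Phi :: "'a measure \<Rightarrow> (real \<Rightarrow> 'a \<Rightarrow> real) \<Rightarrow> real \<Rightarrow> real \<Rightarrow> real" where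
  "Phi M X s t = (\<integral>\<omega>. Y1 M X s \<omega> * Y1 M X t \<omega> \<partial>M)"

definition varphi_aq :: "real \<Rightarrow> nat \<Rightarrow> real \<Rightarrow> real" where
  "varphi_aq \<alpha> q \<epsilon> = (if \<alpha> < 2 - 1 / real q then \<epsilon> else \<epsilon> / \<bar>ln \<epsilon>\<bar>)"

definition H1 :: "'a measure \<Rightarrow> (real \<Rightarrow> 'a \<Rightarrow> real) \<Rightarrow> real \<Rightarrow> real \<Rightarrow> real \<Rightarrow> (real \<Rightarrow> real) \<Rightarrow> bool" where
  "H1 M X \<beta> \<alpha> lam \<psi> \<longleftrightarrow> 0 < \<alpha> \<and> \<alpha> \<le> 2 * \<beta> \<and> lam > 0 \<and>
     (\<forall>x\<ge>1. cov_phi M X x = - lam * (x - 1) powr \<alpha> + \<psi> x) \<and>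
     (\<exists>U. open U \<and> {1..} \<subseteq> U \<and>
        (\<forall>x\<in>U. \<psi> differentiable (at x) \<and> deriv \<psi> differentiable (at x))) \<and>
     (\<exists>C\<ge>0. \<forall>x>1. \<bar>deriv \<psi> x\<bar> \<le> C * x powr (\<alpha> - 1) \<and>
        \<bar>deriv (deriv \<psi>) x\<bar> \<le> C * x powr (-1) * (x - 1) powr (\<alpha> - 1)) \<and>
     (\<alpha> \<ge> 1 \<longrightarrow> deriv \<psi> 1 = \<beta> * \<psi> 1)"

definition H2 :: "'a measure \<Rightarrow> (real \<Rightarrow> 'a \<Rightarrow> real) \<Rightarrow> real \<Rightarrow> real \<Rightarrow> real \<Rightarrow> bool" where
  "H2 M X \<alpha> c \<nu> \<longleftrightarrow> c > 1 \<and> 1 < \<nu> \<and> \<nu> \<le> 2 \<and>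
     (\<exists>C>0. \<forall>x\<ge>c.
        (\<alpha> < 1 \<longrightarrow> \<bar>deriv (cov_phi M X) x\<bar> \<le> C * x powr (-\<nu>) \<and>
                   \<bar>deriv (deriv (cov_phi M X)) x\<bar> \<le> C * x powr (-\<nu> - 1)) \<and>
        (\<alpha> \<ge> 1 \<longrightarrow> \<bar>deriv (cov_phi M X) x\<bar> \<le> C * x powr (\<alpha> - 2) \<and>
                   \<bar>deriv (deriv (cov_phi M X)) x\<bar> \<le> C * x powr (\<alpha> - 3)))"

definition D2 :: "real \<Rightarrow> (real \<times> real) set" where
  "D2 c = {(s, t). s \<ge> 0 \<and> t \<ge> 0 \<and> \<bar>s - t\<bar> \<ge> (c - 1) * min s t + c}"

end

theory Submission
  imports Defs
begin

lemma L2_prod: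
  fixes f g :: "'a \<Rightarrow> real"
  assumes "integrable M (\<lambda>w. (f w)^2)" "integrable M (\<lambda>w. (g w)^2)"
    "f \<in> borel_measurable M" "g \<in> borel_measurable M"
  shows "integrable M (\<lambda>w. f w * g w)"
proof (rule Bochner_Integration.integrable_bound[where f="\<lambda>w. (f w)^2 + (g w)^2"])
  show "integrable M (\<lambda>w. (f w)^2 + (g w)^2)" using assms by auto
  show "(\<lambda>w. f w * g w) \<in> borel_measurable M" using assms by auto
  show "AE w in M. norm (f w * g w) \<le> norm ((f w)^2 + (g w)^2)"
  proof (rule AE_I2)
    fix w
    have "\<bar>f w * g w\<bar> \<le> (f w)^2 + (g w)^2"
    proof -
      have "0 \<le> (\<bar>f w\<bar> - \<bar>g w\<bar>)^2" by simp
      hence "2*(\<bar>f w\<bar>*\<bar>g w\<bar>) \<le> \<bar>f w\<bar>^2 + \<bar>g w\<bar>^2" by (simp add: power2_eq_square algebra_simps)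
      moreover have "0 \<le> \<bar>f w\<bar>*\<bar>g w\<bar>" by simp
      moreover have "\<bar>f w\<bar>^2 = (f w)^2" "\<bar>g w\<bar>^2 = (g w)^2" by simp_all
      ultimately have "\<bar>f w\<bar>*\<bar>g w\<bar> \<le> (f w)^2 + (g w)^2" by linarith
      thus ?thesis by (simp add: abs_mult)
    qed
    then show "norm (f w * g w) \<le> norm ((f w)^2 + (g w)^2)" by simp
  qed
qed

lemma quad_discr:
  fixes A B C :: real
  assumes "\<And>r. 0 \<le> A + 2*r*B + r^2*C" "C \<ge> 0"
  shows "B^2 \<le> A*C"
proof (cases "C = 0")
  case True
  have "B = 0"
  proof (rule ccontr)
    assume "B \<noteq> 0"
    have "0 \<le> A + 2*(-(\<bar>A\<bar>+1)/B/2)*B" using assms(1)[of "-(\<bar>A\<bar>+1)/B/2"] True by simp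
    also have "\<dots> = A - (\<bar>A\<bar>+1)" using \<open>B \<noteq> 0\<close> by (simp add: field_simps)
    finally show False by simp
  qed
  then show ?thesis using True by simp
next
  case False
  have C0: "C \<ge> 0" by (rule assms(2))
  with False have Cp: "C > 0" by simp
  have "0 \<le> A + 2*(-B/C)*B + (-B/C)^2*C" by (rule assms(1))
  also have "\<dots> = A - B^2/C" using Cp by (simp add: field_simps power2_eq_square)
  finally show ?thesis using Cp by (simp add: field_simps)
qed

lemma CS_integral:
  fixes f g :: "'a \<Rightarrow> real"
  assumes "integrable M (\<lambda>w. (f w)^2)" "integrable M (\<lambda>w. (g w)^2)"
    "f \<in> borel_measurable M" "g \<in> borel_measurable M"
  shows "(\<integral>w. f w * g w \<partial>M)^2 \<le> (\<integral>w. (f w)^2 \<partial>M) * (\<integral>w. (g w)^2 \<partial>M)"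
proof (rule quad_discr)
  show "0 \<le> (\<integral>w. (g w)^2 \<partial>M)" by simp
next
  fix r :: real
  have i: "integrable M (\<lambda>w. f w * g w)" using L2_prod assms by blast
  have "0 \<le> (\<integral>w. (f w + r * g w)^2 \<partial>M)" by simp
  also have "(\<integral>w. (f w + r * g w)^2 \<partial>M) = (\<integral>w. (f w)^2 + 2*r*(f w * g w) + r^2 * (g w)^2 \<partial>M)"
    by (rule Bochner_Integration.integral_cong) (auto simp: power2_eq_square algebra_simps)
  also have "\<dots> = (\<integral>w. (f w)^2 \<partial>M) + 2*r*(\<integral>w. f w * g w \<partial>M) + r^2 * (\<integral>w. (g w)^2 \<partial>M)"
    using assms i by simp
  finally show "0 \<le> (\<integral>w. (f w)^2 \<partial>M) + 2*r*(\<integral>w. f w * g w \<partial>M) + r^2 * (\<integral>w. (g w)^2 \<partial>M)" .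
qed

locale ssproc =
  fixes M :: "'a measure" and X :: "real \<Rightarrow> 'a \<Rightarrow> real" and \<beta> :: real
  assumes cgp: "centered_gaussian_process M X" and ss: "self_similar M X \<beta>" and bpos: "0 < \<beta>"
begin

lemma meas[measurable]: "t \<ge> 0 \<Longrightarrow> X t \<in> borel_measurable M"
  using cgp unfolding centered_gaussian_process_def by auto

lemma prob: "prob_space M"
  using cgp unfolding centered_gaussian_process_def by auto

lemma sq_int: assumes "t \<ge> 0" shows "integrable M (\<lambda>w. (X t w)^2)"
proof -
  have "\<forall>ts a :: real list. length a = length ts \<longrightarrow> set ts \<subseteq> {0..} \<longrightarrow>
        centered_gaussian_rv M (\<lambda>\<omega>. \<Sum>i<length ts. a ! i * X (ts ! i) \<omega>)"
    using cgp unfolding centered_gaussian_process_def by blast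
  from this[rule_format, of "[1]" "[t]"] assms
  have "centered_gaussian_rv M (\<lambda>w. \<Sum>i<length [t]. [1::real] ! i * X ([t] ! i) w)" by simp
  hence g: "centered_gaussian_rv M (X t)" by simp
  show ?thesis
  proof (cases "AE w in M. X t w = 0")
    case True
    have "integrable M (\<lambda>w. (0::real))" by simp
    moreover have "AE w in M. 0 = (X t w)^2" using True by auto
    ultimately show ?thesis using assms
      by (subst integrable_cong_AE[where g="\<lambda>w. 0"]) auto
  next
    case False
    with g obtain \<sigma> where s: "\<sigma> > 0" "distributed M lborel (X t) (normal_density 0 \<sigma>)"
      unfolding centered_gaussian_rv_def by auto
    have "integrable lborel (\<lambda>x. normal_density 0 \<sigma> x * x^2)"
      using integrable_normal_moment[where k=2 and \<mu>=0 and \<sigma>=\<sigma>] s(1) by simp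
    then show ?thesis
      using distributed_integrable[OF s(2), of "\<lambda>x. x^2"] by simp
  qed
qed

definition R where "R a b = (\<integral>w. X a w * X b w \<partial>M)"

lemma R_sym: "R a b = R b a" unfolding R_def by (simp add: mult.commute)

lemma prod_int: "a \<ge> 0 \<Longrightarrow> b \<ge> 0 \<Longrightarrow> integrable M (\<lambda>w. X a w * X b w)"
  by (rule L2_prod) (auto intro: sq_int)

lemma scale:
  assumes c: "c > 0" and a: "a \<ge> 0" and b: "b \<ge> 0"
  shows "R (c*a) (c*b) = c powr (2*\<beta>) * R a b"
proof -
  let ?P = "Pi\<^sub>M {0::real..} (\<lambda>_. borel :: real measure)"
  have eq: "distr M ?P (\<lambda>w. \<lambda>t\<in>{0..}. X (c * t) w) = distr M ?P (\<lambda>w. \<lambda>t\<in>{0..}. c powr \<beta> * X t w)"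
    using ss c unfolding self_similar_def by auto
  have m1: "(\<lambda>w. \<lambda>t\<in>{0::real..}. X (c * t) w) \<in> measurable M ?P"
    by (rule measurable_restrict) (use c in \<open>auto intro!: meas\<close>)
  have m2: "(\<lambda>w. \<lambda>t\<in>{0::real..}. c powr \<beta> * X t w) \<in> measurable M ?P"
    by (rule measurable_restrict) (auto intro!: meas)
  have h: "(\<lambda>f. f a * f b) \<in> borel_measurable ?P"
  proof -
    have "(\<lambda>f. f a) \<in> borel_measurable ?P" "(\<lambda>f. f b) \<in> borel_measurable ?P"
      using a b by (auto intro!: measurable_component_singleton)
    then show ?thesis by (rule borel_measurable_times)
  qed
  have "integral\<^sup>L (distr M ?P (\<lambda>w. \<lambda>t\<in>{0..}. X (c * t) w)) (\<lambda>f. f a * f b)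
      = integral\<^sup>L (distr M ?P (\<lambda>w. \<lambda>t\<in>{0..}. c powr \<beta> * X t w)) (\<lambda>f. f a * f b)"
    using eq by simp
  hence "(\<integral>w. X (c*a) w * X (c*b) w \<partial>M) = (\<integral>w. (c powr \<beta> * X a w) * (c powr \<beta> * X b w) \<partial>M)"
    using a b by (simp add: integral_distr[OF m1 h] integral_distr[OF m2 h])
  also have "\<dots> = (\<integral>w. c powr (2*\<beta>) * (X a w * X b w) \<partial>M)"
  proof -
    have pw: "c powr (2*\<beta>) = c powr \<beta> * c powr \<beta>" by (simp add: powr_add[symmetric])
    show ?thesis unfolding pw by (rule Bochner_Integration.integral_cong) (simp_all add: mult_ac)
  qed
  also have "\<dots> = c powr (2*\<beta>) * R a b" unfolding R_def by simp
  finally show ?thesis unfolding R_def .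
qed

lemma R_CS: "a \<ge> 0 \<Longrightarrow> b \<ge> 0 \<Longrightarrow> (R a b)^2 \<le> R a a * R b b"
  unfolding R_def using CS_integral[of M "X a" "X b"] sq_int meas by (simp add: power2_eq_square)

lemma R_nonneg: "R a a \<ge> 0" unfolding R_def by simp

lemma R00: "R 0 0 = 0"
proof -
  have "R (2*0) (2*0) = 2 powr (2*\<beta>) * R 0 0" by (rule scale) auto
  moreover have "2 powr (2*\<beta>) \<noteq> (1::real)" using bpos by simp
  ultimately show ?thesis by simp
qed

lemma R0: assumes "b \<ge> 0" shows "R 0 b = 0"
  using R_CS[of 0 b] assms R00 by simp

lemma R_phi: assumes "a \<ge> 0" "b \<ge> 0" shows "R a b = a powr (2*\<beta>) * cov_phi M X (b/a)"
proof (cases "a = 0")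
  case True then show ?thesis using R0 assms by simp
next
  case False
  then have "R (a*1) (a*(b/a)) = a powr (2*\<beta>) * R 1 (b/a)" using assms by (intro scale) auto
  then show ?thesis using False unfolding cov_phi_def R_def by simp
qed

definition Q where "Q u = (\<integral>w. (X (u+1) w - X u w)^2 \<partial>M)"

lemma Q_eq: assumes "u \<ge> 0" shows "Q u = R (u+1) (u+1) - 2 * R u (u+1) + R u u"
proof -
  have "Q u = (\<integral>w. X (u+1) w * X (u+1) w - 2 * (X u w * X (u+1) w) + X u w * X u w \<partial>M)"
    unfolding Q_def by (rule Bochner_Integration.integral_cong) (auto simp: power2_eq_square algebra_simps)
  also have "\<dots> = R (u+1) (u+1) - 2 * R u (u+1) + R u u"
    unfolding R_def using assms by (simp add: prod_int)
  finally show ?thesis .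
qed

lemma Q_ge: assumes "u \<ge> 0" shows "Q u \<ge> (sqrt (R (u+1) (u+1)) - sqrt (R u u))^2"
proof -
  have "(R u (u+1))^2 \<le> R u u * R (u+1) (u+1)" using R_CS assms by simp
  hence "R u (u+1) \<le> sqrt (R u u * R (u+1) (u+1))"
    by (metis abs_le_D1 real_sqrt_abs real_sqrt_le_mono)
  hence "R u (u+1) \<le> sqrt (R u u) * sqrt (R (u+1) (u+1))" by (simp add: real_sqrt_mult)
  moreover have "(sqrt (R (u+1) (u+1)) - sqrt (R u u))^2 = R (u+1) (u+1) - 2 * (sqrt (R u u) * sqrt (R (u+1) (u+1))) + R u u"
    using R_nonneg by (simp add: power2_eq_square algebra_simps)
  ultimately show ?thesis using Q_eq assms by simp
qed

lemma Q_nonneg: "Q u \<ge> 0" unfolding Q_def by simp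

lemma Phi_eq: assumes "s \<ge> 0" "t \<ge> 0"
  shows "Phi M X s t = (R (s+1) (t+1) - R (s+1) t - R s (t+1) + R s t) / (sqrt (Q s) * sqrt (Q t))"
proof -
  have "Phi M X s t = (\<integral>w. (X (s+1) w - X s w) * (X (t+1) w - X t w) / (sqrt (Q s) * sqrt (Q t)) \<partial>M)"
    unfolding Phi_def Y1_def Q_def by (rule Bochner_Integration.integral_cong) auto
  also have "\<dots> = (\<integral>w. (X (s+1) w - X s w) * (X (t+1) w - X t w) \<partial>M) / (sqrt (Q s) * sqrt (Q t))"
    by simp
  also have "(\<integral>w. (X (s+1) w - X s w) * (X (t+1) w - X t w) \<partial>M) = 
     (\<integral>w. X (s+1) w * X (t+1) w - X (s+1) w * X t w - X s w * X (t+1) w + X s w * X t w \<partial>M)"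
    by (rule Bochner_Integration.integral_cong) (auto simp: algebra_simps)
  also have "\<dots> = R (s+1) (t+1) - R (s+1) t - R s (t+1) + R s t"
    unfolding R_def using assms by (simp add: prod_int)
  finally show ?thesis .
qed

end

lemma pw_div:
  fixes u z m :: real
  assumes "u > 0" "z > 0"
  shows "(z/u) powr (-m) = z powr (-m) * u powr m"
  using assms by (subst powr_divide) (simp_all add: powr_minus_divide)

lemma pw_id1:
  fixes u z a m :: real
  assumes "u > 0" "z > 0"
  shows "u powr a / u * (z/u) powr (-m) = u powr (a - 1 + m) * z powr (-m)"
proof -
  have "(z/u) powr (-m) = z powr (-m) * u powr m"
    using assms by (rule pw_div)
  moreover have "u powr (a - 1 + m) = u powr a / u * u powr m"
    using assms by (simp add: powr_add powr_diff)
  ultimately show ?thesis by (simp add: algebra_simps)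
qed

lemma pw_id2:
  fixes u z a m :: real
  assumes "u > 0" "z > 0"
  shows "u powr a * (z/u) powr (-m) = u powr (a + m) * z powr (-m)"
proof -
  have "(z/u) powr (-m) = z powr (-m) * u powr m"
    using assms by (rule pw_div)
  moreover have "u powr (a + m) = u powr a * u powr m"
    using assms by (simp add: powr_add)
  ultimately show ?thesis by (simp add: algebra_simps)
qed

lemma pw_id3:
  fixes u z a m :: real
  assumes "u > 0" "z > 0"
  shows "u powr a * ((z/u) powr (-m-1) * (z / u^2)) = u powr (a - 1 + m) * z powr (-m)"
proof -
  have "(z/u) powr (-m-1) = z powr (-m-1) * u powr (m+1)"
    using assms pw_div[of u z "m+1"] by simp
  also have "\<dots> = z powr (-m) / z * (u powr m * u)"
    using assms by (simp add: powr_add powr_diff)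
  finally have e1: "(z/u) powr (-m-1) = z powr (-m) / z * (u powr m * u)" .
  moreover have "u powr (a - 1 + m) = u powr a / u * u powr m"
    using assms by (simp add: powr_add powr_diff)
  show ?thesis unfolding e1 \<open>u powr (a - 1 + m) = u powr a / u * u powr m\<close> using assms
    by (simp add: field_simps power2_eq_square)
qed

lemma single_diff:
  fixes f f1 :: "real \<Rightarrow> real"
  assumes c: "c > 0" and u: "u > 0" and t: "t \<ge> c*u"
    and df: "\<And>x. x \<ge> c \<Longrightarrow> (f has_real_derivative f1 x) (at x)"
    and b1: "\<And>x. x \<ge> c \<Longrightarrow> \<bar>f1 x\<bar> \<le> C * x powr (-m)" and m: "m \<ge> 0"
  shows "\<bar>u powr a * f ((t+1)/u) - u powr a * f (t/u)\<bar> \<le> C * u powr (a - 1 + m) * t powr (-m)"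
proof -
  have "c*u > 0" using c u by simp
  hence tpos: "t > 0" using t by linarith
  have der: "((\<lambda>v. u powr a * f (v/u)) has_real_derivative u powr a * (f1 (v/u) * (1/u))) (at v)"
    if "t \<le> v" "v \<le> t+1" for v
  proof -
    have "v/u \<ge> c" using that t u by (simp add: field_simps)
    then have "(f has_real_derivative f1 (v/u)) (at (v/u))" by (rule df)
    moreover have "((\<lambda>v. v/u) has_real_derivative 1/u) (at v)"
      using u by (auto intro!: derivative_eq_intros)
    ultimately have "((\<lambda>v. f (v/u)) has_real_derivative f1 (v/u) * (1/u)) (at v)"
      by (rule DERIV_chain2)
    then show ?thesis by (rule DERIV_cmult)
  qed
  obtain z where z: "t < z" "z < t+1"
    "u powr a * f ((t+1)/u) - u powr a * f (t/u) = (t+1-t) * (u powr a * (f1 (z/u) * (1/u)))"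
    using MVT2[of t "t+1" "\<lambda>v. u powr a * f (v/u)", OF _ der] by auto
  have zc: "z/u \<ge> c" using z t u by (simp add: field_simps)
  have "\<bar>u powr a * f ((t+1)/u) - u powr a * f (t/u)\<bar> = u powr a / u * \<bar>f1 (z/u)\<bar>"
    using z(3) u by (simp add: abs_mult)
  also have "\<dots> \<le> u powr a / u * (C * (z/u) powr (-m))"
    using b1[OF zc] u by (intro mult_left_mono) auto
  also have "\<dots> = C * (u powr a / u * (z/u) powr (-m))" by simp
  also have "\<dots> = C * (u powr (a - 1 + m) * z powr (-m))"
    using pw_id1[of u z a m] u z tpos by simp
  also have "\<dots> \<le> C * (u powr (a - 1 + m) * t powr (-m))"
  proof -
    have C: "C \<ge> 0"
    proof -
      have "0 \<le> \<bar>f1 c\<bar>" by simp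
      also have "\<dots> \<le> C * c powr (-m)" using b1[of c] by simp
      finally show ?thesis using c by (simp add: zero_le_mult_iff)
    qed
    have "z powr (-m) \<le> t powr (-m)" using powr_mono2'[of "-m" t z] m tpos z by simp
    then show ?thesis using C by (intro mult_left_mono) auto
  qed
  finally show ?thesis by simp
qed

lemma xi_bound:
  fixes s \<xi> p :: real
  assumes "s \<ge> 1" "s \<le> \<xi>" "\<xi> \<le> s+1"
  shows "\<xi> powr p \<le> 2 powr \<bar>p\<bar> * (s+1) powr p"
proof (cases "p \<ge> 0")
  case True
  have "\<xi> powr p \<le> (s+1) powr p" using assms True by (intro powr_mono2) auto
  also have "\<dots> \<le> 2 powr \<bar>p\<bar> * (s+1) powr p"
  proof -
    have "1 \<le> 2 powr \<bar>p\<bar>" by (rule ge_one_powr_ge_zero) auto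
    then show ?thesis using assms by (simp add: mult_le_cancel_right1)
  qed
  finally show ?thesis .
next
  case False
  have "\<xi> powr p \<le> ((s+1)/2) powr p" using assms False by (intro powr_mono2') auto
  also have "\<dots> = (s+1) powr p / 2 powr p" using assms by (simp add: powr_divide)
  also have "\<dots> = 2 powr \<bar>p\<bar> * (s+1) powr p" using False by (simp add: abs_of_neg powr_minus_divide)
  finally show ?thesis .
qed

lemma t_shift:
  fixes t m :: real
  assumes "t \<ge> 1" "m \<ge> 0"
  shows "t powr (-m) \<le> 2 powr m * (t+1) powr (-m)"
proof -
  have "(2*t) powr (-m) \<le> (t+1) powr (-m)" using assms by (intro powr_mono2') auto
  hence "2 powr (-m) * t powr (-m) \<le> (t+1) powr (-m)" using assms by (simp add: powr_mult)
  hence "2 powr m * (2 powr (-m) * t powr (-m)) \<le> 2 powr m * (t+1) powr (-m)" by simp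
  moreover have "2 powr m * (2 powr (-m) * t powr (-m)) = t powr (-m)"
    by (simp add: powr_minus field_simps)
  ultimately show ?thesis by simp
qed

lemma double_diff:
  fixes f f1 f2 :: "real \<Rightarrow> real"
  assumes c: "c > 1" and s: "s \<ge> 1" and t: "t \<ge> c*(s+1)"
    and df: "\<And>x. x \<ge> c \<Longrightarrow> (f has_real_derivative f1 x) (at x)"
    and df1: "\<And>x. x \<ge> c \<Longrightarrow> (f1 has_real_derivative f2 x) (at x)"
    and b1: "\<And>x. x \<ge> c \<Longrightarrow> \<bar>f1 x\<bar> \<le> C * x powr (-m)"
    and b2: "\<And>x. x \<ge> c \<Longrightarrow> \<bar>f2 x\<bar> \<le> C * x powr (-m-1)" and m: "m \<ge> 0"
  shows "\<bar>(s+1) powr a * f ((t+1)/(s+1)) - (s+1) powr a * f (t/(s+1)) - (s powr a * f ((t+1)/s) - s powr a * f (t/s))\<bar>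
     \<le> (\<bar>a-1\<bar>+1) * C * 2 powr \<bar>a-2+m\<bar> * (s+1) powr (a-2+m) * t powr (-m)"
proof -
  have C: "C \<ge> 0"
  proof -
    have "0 \<le> \<bar>f1 c\<bar>" by simp
    also have "\<dots> \<le> C * c powr (-m)" using b1[of c] by simp
    finally show ?thesis using c by (simp add: zero_le_mult_iff)
  qed
  have sp: "s > 0" using s by simp
  have "c*(s+1) > 0" using c sp by simp
  hence tpos: "t > 0" using t by linarith
  define H where "H v = (s+1) powr a * f (v/(s+1)) - s powr a * f (v/s)" for v
  define H' where "H' v = (s+1) powr a * (f1 (v/(s+1)) * (1/(s+1))) - s powr a * (f1 (v/s) * (1/s))" for v
  have dchain: "((\<lambda>v. f (v/u)) has_real_derivative f1 (v/u) * (1/u)) (at v)" if "u > 0" "v/u \<ge> c" for u v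
  proof -
    have "(f has_real_derivative f1 (v/u)) (at (v/u))" using that by (intro df) auto
    moreover have "((\<lambda>v. v/u) has_real_derivative 1/u) (at v)"
      using that by (auto intro!: derivative_eq_intros)
    ultimately show ?thesis by (rule DERIV_chain2)
  qed
  have derH: "(H has_real_derivative H' v) (at v)" if "t \<le> v" "v \<le> t+1" for v
  proof -
    have v1: "v/(s+1) \<ge> c" using that t sp by (simp add: field_simps)
    have v2: "v/s \<ge> c"
    proof -
      have "c * s \<le> c*(s+1)" using c by simp
      then show ?thesis using that t sp by (simp add: field_simps)
    qed
    show ?thesis unfolding H_def[abs_def] H'_def
      by (intro DERIV_diff DERIV_cmult dchain) (use v1 v2 sp in auto)
  qed
  obtain \<eta> where eta: "t < \<eta>" "\<eta> < t+1" "H (t+1) - H t = (t+1-t) * H' \<eta>"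
    using MVT2[of t "t+1" H H', OF _ derH] by auto
  define K where "K u = u powr (a-1) * f1 (\<eta>/u)" for u
  define K' where "K' u = ((a-1) * u powr (a-1-1)) * f1 (\<eta>/u) + (f2 (\<eta>/u) * (-\<eta>/u^2)) * u powr (a-1)" for u
  have HK: "H' \<eta> = K (s+1) - K s"
  proof -
    have e: "u powr a * (y * (1/u)) = u powr (a-1) * y" if "u > 0" for u y :: real
      using that by (simp add: powr_diff)
    show ?thesis unfolding H'_def K_def using e[of "s+1"] e[of s] sp by simp
  qed
  have derK: "(K has_real_derivative K' u) (at u)" if "s \<le> u" "u \<le> s+1" for u
  proof -
    have up: "u > 0" using that sp by simp
    have uc: "\<eta>/u \<ge> c"
    proof -
      have "\<eta> \<ge> c*(s+1)" using eta t by simp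
      moreover have "c*(s+1) \<ge> c*u" using that c by simp
      ultimately show ?thesis using up by (simp add: field_simps)
    qed
    have d1: "((\<lambda>u. u powr (a-1)) has_real_derivative (a-1) * u powr (a-1-1)) (at u)"
      using up by (rule has_real_derivative_powr)
    have d2: "((\<lambda>u. \<eta>/u) has_real_derivative -\<eta>/u^2) (at u)"
      using up by (auto intro!: derivative_eq_intros simp: power2_eq_square field_simps)
    have d3: "((\<lambda>u. f1 (\<eta>/u)) has_real_derivative f2 (\<eta>/u) * (-\<eta>/u^2)) (at u)"
      using df1[OF uc] d2 by (rule DERIV_chain2)
    show ?thesis unfolding K_def[abs_def] K'_def using DERIV_mult[OF d1 d3] by simp
  qed
  obtain \<xi> where xi: "s < \<xi>" "\<xi> < s+1" "K (s+1) - K s = (s+1-s) * K' \<xi>"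
    using MVT2[of s "s+1" K K', OF _ derK] by auto
  have xip: "\<xi> > 0" using xi sp by simp
  have etap: "\<eta> > 0" using eta tpos by simp
  have xic: "\<eta>/\<xi> \<ge> c"
  proof -
    have "\<eta> \<ge> c*(s+1)" using eta t by simp
    moreover have "c*(s+1) \<ge> c*\<xi>" using xi c by simp
    ultimately show ?thesis using xip by (simp add: field_simps)
  qed
  have "(s+1) powr a * f ((t+1)/(s+1)) - (s+1) powr a * f (t/(s+1)) - (s powr a * f ((t+1)/s) - s powr a * f (t/s))
      = K' \<xi>" using eta(3) xi(3) HK unfolding H_def by simp
  hence "\<bar>(s+1) powr a * f ((t+1)/(s+1)) - (s+1) powr a * f (t/(s+1)) - (s powr a * f ((t+1)/s) - s powr a * f (t/s))\<bar>
      = \<bar>K' \<xi>\<bar>" by simp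
  also have "\<bar>K' \<xi>\<bar> \<le> \<bar>a-1\<bar> * \<xi> powr (a-2) * \<bar>f1 (\<eta>/\<xi>)\<bar> + \<bar>f2 (\<eta>/\<xi>)\<bar> * (\<eta>/\<xi>^2) * \<xi> powr (a-1)"
  proof -
    have e: "a - 1 - 1 = a - 2" by simp
    have "\<bar>K' \<xi>\<bar> \<le> \<bar>(a-1) * \<xi> powr (a-2) * f1 (\<eta>/\<xi>)\<bar> + \<bar>f2 (\<eta>/\<xi>) * (-\<eta>/\<xi>^2) * \<xi> powr (a-1)\<bar>"
      unfolding K'_def e by (rule abs_triangle_ineq)
    also have "\<bar>(a-1) * \<xi> powr (a-2) * f1 (\<eta>/\<xi>)\<bar> = \<bar>a-1\<bar> * \<xi> powr (a-2) * \<bar>f1 (\<eta>/\<xi>)\<bar>"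
      by (simp add: abs_mult)
    also have "\<bar>f2 (\<eta>/\<xi>) * (-\<eta>/\<xi>^2) * \<xi> powr (a-1)\<bar> = \<bar>f2 (\<eta>/\<xi>)\<bar> * (\<eta>/\<xi>^2) * \<xi> powr (a-1)"
      using etap by (simp add: abs_mult)
    finally show ?thesis .
  qed
  also have "\<dots> \<le> \<bar>a-1\<bar> * \<xi> powr (a-2) * (C * (\<eta>/\<xi>) powr (-m)) + (C * (\<eta>/\<xi>) powr (-m-1)) * (\<eta>/\<xi>^2) * \<xi> powr (a-1)"
  proof (rule add_mono)
    show "\<bar>a-1\<bar> * \<xi> powr (a-2) * \<bar>f1 (\<eta>/\<xi>)\<bar> \<le> \<bar>a-1\<bar> * \<xi> powr (a-2) * (C * (\<eta>/\<xi>) powr (-m))"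
      by (rule mult_left_mono[OF b1[OF xic]]) simp
    have "\<bar>f2 (\<eta>/\<xi>)\<bar> * (\<eta>/\<xi>^2) \<le> (C * (\<eta>/\<xi>) powr (-m-1)) * (\<eta>/\<xi>^2)"
      by (rule mult_right_mono[OF b2[OF xic]]) (use etap xip in simp)
    then show "\<bar>f2 (\<eta>/\<xi>)\<bar> * (\<eta>/\<xi>^2) * \<xi> powr (a-1) \<le> (C * (\<eta>/\<xi>) powr (-m-1)) * (\<eta>/\<xi>^2) * \<xi> powr (a-1)"
      by (rule mult_right_mono) simp
  qed
  also have "\<dots> = \<bar>a-1\<bar> * C * (\<xi> powr (a-2) * (\<eta>/\<xi>) powr (-m)) + C * (\<xi> powr (a-1) * ((\<eta>/\<xi>) powr (-m-1) * (\<eta>/\<xi>^2)))"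
    by (simp add: algebra_simps)
  also have "\<dots> = (\<bar>a-1\<bar>+1) * C * (\<xi> powr (a-2+m) * \<eta> powr (-m))"
    using pw_id2[OF xip etap, of "a-2" m] pw_id3[OF xip etap, of "a-1" m] by (simp add: algebra_simps)
  also have "\<dots> \<le> (\<bar>a-1\<bar>+1) * C * ((2 powr \<bar>a-2+m\<bar> * (s+1) powr (a-2+m)) * t powr (-m))"
  proof -
    have "\<xi> powr (a-2+m) \<le> 2 powr \<bar>a-2+m\<bar> * (s+1) powr (a-2+m)"
      using xi s by (intro xi_bound) auto
    moreover have "\<eta> powr (-m) \<le> t powr (-m)" using powr_mono2'[of "-m" t \<eta>] m tpos eta by simp
    ultimately show ?thesis using C by (intro mult_left_mono mult_mono) auto
  qed
  finally show ?thesis by (simp add: algebra_simps)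
qed

lemma delta_all:
  fixes f f1 f2 :: "real \<Rightarrow> real"
  assumes c: "c > 1"
    and df: "\<And>x. x \<ge> c \<Longrightarrow> (f has_real_derivative f1 x) (at x)"
    and df1: "\<And>x. x \<ge> c \<Longrightarrow> (f1 has_real_derivative f2 x) (at x)"
    and b1: "\<And>x. x \<ge> c \<Longrightarrow> \<bar>f1 x\<bar> \<le> C * x powr (-m)"
    and b2: "\<And>x. x \<ge> c \<Longrightarrow> \<bar>f2 x\<bar> \<le> C * x powr (-m-1)" and m: "m \<ge> 0"
    and e: "a - 1 + m \<ge> 0"
  shows "\<exists>K. \<forall>s t. s \<ge> 0 \<longrightarrow> t \<ge> c*(s+1) \<longrightarrow>
     \<bar>(s+1) powr a * f ((t+1)/(s+1)) - (s+1) powr a * f (t/(s+1)) - (s powr a * f ((t+1)/s) - s powr a * f (t/s))\<bar>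
     \<le> K * (s+1) powr (a-2+m) * (t+1) powr (-m)"
proof -
  have C: "C \<ge> 0"
  proof -
    have "0 \<le> \<bar>f1 c\<bar>" by simp
    also have "\<dots> \<le> C * c powr (-m)" using b1[of c] by simp
    finally show ?thesis using c by (simp add: zero_le_mult_iff)
  qed
  define p where "p = a-2+m"
  define K where "K = (\<bar>a-1\<bar> + 1 + 2 powr (a-1+m) + 1) * C * 2 powr \<bar>p\<bar> * 2 powr m"
  show ?thesis
  proof (intro exI allI impI)
    fix s t :: real
    assume s: "s \<ge> 0" and t: "t \<ge> c*(s+1)"
    have t1: "t \<ge> 1"
    proof -
      have "c*(s+1) \<ge> 1*1" using c s by (intro mult_mono) auto
      then show ?thesis using t by simp
    qed
    have tsh: "t powr (-m) \<le> 2 powr m * (t+1) powr (-m)" using t1 m by (rule t_shift)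
    let ?D = "(s+1) powr a * f ((t+1)/(s+1)) - (s+1) powr a * f (t/(s+1)) - (s powr a * f ((t+1)/s) - s powr a * f (t/s))"
    show "\<bar>?D\<bar> \<le> K * (s+1) powr (a-2+m) * (t+1) powr (-m)"
    proof (cases "s \<ge> 1")
      case True
      have "\<bar>?D\<bar> \<le> (\<bar>a-1\<bar>+1) * C * 2 powr \<bar>a-2+m\<bar> * (s+1) powr (a-2+m) * t powr (-m)"
        by (rule double_diff[OF c True t df df1 b1 b2 m])
      also have "\<dots> \<le> (\<bar>a-1\<bar>+1) * C * 2 powr \<bar>a-2+m\<bar> * (s+1) powr (a-2+m) * (2 powr m * (t+1) powr (-m))"
        using tsh C by (intro mult_left_mono) auto
      also have "\<dots> \<le> K * (s+1) powr (a-2+m) * (t+1) powr (-m)"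
      proof -
        have "(\<bar>a-1\<bar>+1) \<le> (\<bar>a-1\<bar> + 1 + 2 powr (a-1+m) + 1)" by simp
        hence "(\<bar>a-1\<bar>+1) * (C * 2 powr \<bar>p\<bar> * 2 powr m) \<le> (\<bar>a-1\<bar> + 1 + 2 powr (a-1+m) + 1) * (C * 2 powr \<bar>p\<bar> * 2 powr m)"
          using C by (intro mult_right_mono) auto
        hence "(\<bar>a-1\<bar>+1) * (C * 2 powr \<bar>p\<bar> * 2 powr m) * ((s+1) powr p * (t+1) powr (-m)) \<le> K * ((s+1) powr p * (t+1) powr (-m))"
          unfolding K_def by (intro mult_right_mono) (auto simp: mult_ac)
        then show ?thesis unfolding p_def by (simp add: mult_ac)
      qed
      finally show ?thesis .
    next
      case False
      hence s1: "s < 1" by simp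
      have A1: "\<bar>(s+1) powr a * f ((t+1)/(s+1)) - (s+1) powr a * f (t/(s+1))\<bar> \<le> C * (s+1) powr (a-1+m) * t powr (-m)"
        by (rule single_diff[OF _ _ _ df b1 m]) (use c s t in auto)
      have A2: "\<bar>s powr a * f ((t+1)/s) - s powr a * f (t/s)\<bar> \<le> C * 1 * t powr (-m)"
      proof (cases "s = 0")
        case True then show ?thesis using C by simp
      next
        case False
        hence sp: "s > 0" using s by simp
        have "c * s \<le> c * (s+1)" using c by simp
        hence "t \<ge> c * s" using t by simp
        have "\<bar>s powr a * f ((t+1)/s) - s powr a * f (t/s)\<bar> \<le> C * s powr (a-1+m) * t powr (-m)"
          by (rule single_diff[OF _ _ _ df b1 m]) (use c sp \<open>t \<ge> c * s\<close> in auto)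
        also have "\<dots> \<le> C * 1 * t powr (-m)"
          using C s s1 e by (intro mult_right_mono mult_left_mono powr_le1) auto
        finally show ?thesis .
      qed
      have "(s+1) powr (a-1+m) \<le> 2 powr (a-1+m)" using s s1 e by (intro powr_mono2) auto
      hence A1': "\<bar>(s+1) powr a * f ((t+1)/(s+1)) - (s+1) powr a * f (t/(s+1))\<bar> \<le> C * 2 powr (a-1+m) * t powr (-m)"
      proof -
        have "C * (s+1) powr (a-1+m) * t powr (-m) \<le> C * 2 powr (a-1+m) * t powr (-m)"
          using \<open>(s+1) powr (a-1+m) \<le> 2 powr (a-1+m)\<close> C by (intro mult_right_mono mult_left_mono) auto
        then show ?thesis using A1 by linarith
      qed
      have "\<bar>?D\<bar> \<le> C * 2 powr (a-1+m) * t powr (-m) + C * 1 * t powr (-m)"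
        using A1' A2 by linarith
      also have "\<dots> = C * (2 powr (a-1+m) + 1) * t powr (-m)" by (simp add: algebra_simps)
      also have "\<dots> \<le> C * (2 powr (a-1+m) + 1) * (2 powr m * (t+1) powr (-m))"
        using tsh C by (intro mult_left_mono) auto
      also have "\<dots> \<le> C * (2 powr (a-1+m) + 1) * (2 powr m * (t+1) powr (-m)) * (2 powr \<bar>p\<bar> * (s+1) powr p)"
      proof -
        have "1 \<le> 2 powr \<bar>p\<bar> * (s+1) powr p"
        proof (cases "p \<ge> 0")
          case True
          have "1 \<le> 2 powr \<bar>p\<bar>" by (rule ge_one_powr_ge_zero) auto
          moreover have "1 \<le> (s+1) powr p" using True s by (intro ge_one_powr_ge_zero) auto
          ultimately have "1*1 \<le> 2 powr \<bar>p\<bar> * (s+1) powr p" by (intro mult_mono) auto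
          then show ?thesis by simp
        next
          case False
          have "2 powr p \<le> (s+1) powr p" using False s s1 by (intro powr_mono2') auto
          hence "2 powr (-p) * 2 powr p \<le> 2 powr (-p) * (s+1) powr p" by (intro mult_left_mono) auto
          moreover have "2 powr (-p) * 2 powr p = (1::real)" by (simp add: powr_add[symmetric])
          ultimately show ?thesis using False by (simp add: abs_of_neg)
        qed
        moreover have "0 \<le> C * (2 powr (a-1+m) + 1) * (2 powr m * (t+1) powr (-m))" using C by simp
        ultimately have "C * (2 powr (a-1+m) + 1) * (2 powr m * (t+1) powr (-m)) * 1 \<le> C * (2 powr (a-1+m) + 1) * (2 powr m * (t+1) powr (-m)) * (2 powr \<bar>p\<bar> * (s+1) powr p)"
          by (intro mult_left_mono) auto
        then show ?thesis by simp
      qed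
      also have "\<dots> \<le> K * (s+1) powr (a-2+m) * (t+1) powr (-m)"
      proof -
        have "C * (2 powr (a-1+m) + 1) \<le> C * (\<bar>a-1\<bar> + 1 + 2 powr (a-1+m) + 1)" using C by (intro mult_left_mono) auto
        hence "C * (2 powr (a-1+m) + 1) * (2 powr m * (t+1) powr (-m) * 2 powr \<bar>p\<bar> * (s+1) powr p) \<le> C * (\<bar>a-1\<bar> + 1 + 2 powr (a-1+m) + 1) * (2 powr m * (t+1) powr (-m) * 2 powr \<bar>p\<bar> * (s+1) powr p)"
          by (intro mult_right_mono) auto
        then show ?thesis unfolding K_def p_def by (simp add: mult_ac)
      qed
      finally show ?thesis .
    qed
  qed
qed

lemma taylor2:
  fixes F F1 F2 :: "real \<Rightarrow> real"
  assumes h: "h > 0"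
    and d1: "\<And>y. 1 \<le> y \<Longrightarrow> y \<le> 1+h \<Longrightarrow> (F has_real_derivative F1 y) (at y)"
    and d2: "\<And>y. 1 \<le> y \<Longrightarrow> y \<le> 1+h \<Longrightarrow> (F1 has_real_derivative F2 y) (at y)"
  shows "\<exists>z1 z2. 1 < z2 \<and> z2 < z1 \<and> z1 < 1+h \<and> F (1+h) - F 1 - F1 1 * h = h * (z1 - 1) * F2 z2"
proof -
  obtain z1 where z1: "1 < z1" "z1 < 1+h" "F (1+h) - F 1 = (1+h-1) * F1 z1"
    using MVT2[of 1 "1+h" F F1] h d1 by auto
  obtain z2 where z2: "1 < z2" "z2 < z1" "F1 z1 - F1 1 = (z1-1) * F2 z2"
    using MVT2[of 1 z1 F1 F2] z1 d2 by auto
  have "F (1+h) - F 1 - F1 1 * h = h * (F1 z1 - F1 1)" using z1(3) by (simp add: algebra_simps)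
  also have "\<dots> = h * (z1 - 1) * F2 z2" using z2(3) by simp
  finally show ?thesis using z1 z2 by blast
qed

lemma choose_h0:
  fixes E :: "real \<Rightarrow> real"
  assumes K: "K \<ge> 0" and d: "\<delta> > 0" and lam: "lam > 0"
    and b: "\<And>h. 0 < h \<Longrightarrow> h \<le> 1 \<Longrightarrow> \<bar>E h\<bar> \<le> K * h powr \<delta> * h powr \<alpha>"
  shows "\<exists>h0. 0 < h0 \<and> h0 \<le> 1 \<and> (\<forall>h. 0 < h \<and> h \<le> h0 \<longrightarrow> \<bar>E h\<bar> \<le> lam * h powr \<alpha>)"
proof -
  define h0 where "h0 = min 1 ((lam/(K+1)) powr (1/\<delta>))"
  have h0p: "h0 > 0" unfolding h0_def using lam K by simp
  have "\<bar>E h\<bar> \<le> lam * h powr \<alpha>" if "0 < h" "h \<le> h0" for h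
  proof -
    have "h powr \<delta> \<le> h0 powr \<delta>" using that d by (intro powr_mono2) auto
    also have "\<dots> \<le> ((lam/(K+1)) powr (1/\<delta>)) powr \<delta>"
      unfolding h0_def using d h0p h0_def by (intro powr_mono2) auto
    also have "\<dots> = lam/(K+1)" using d lam K by (simp add: powr_powr)
    finally have hd: "h powr \<delta> \<le> lam/(K+1)" .
    have "K * h powr \<delta> \<le> K * (lam/(K+1))" using hd K by (intro mult_left_mono) auto
    also have "\<dots> \<le> lam" using K lam by (simp add: field_simps)
    finally have "K * h powr \<delta> \<le> lam" .
    hence mm: "K * h powr \<delta> * h powr \<alpha> \<le> lam * h powr \<alpha>" by (intro mult_right_mono) auto
    have "h \<le> 1" using that unfolding h0_def by simp
    hence "\<bar>E h\<bar> \<le> K * h powr \<delta> * h powr \<alpha>" using b that by simp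
    then show ?thesis using mm by linarith
  qed
  then show ?thesis using h0p unfolding h0_def by (intro exI[of _ h0]) (auto simp: h0_def)
qed

lemma psi_derivs:
  assumes U: "open U" "{1..} \<subseteq> U" "\<And>x. x \<in> U \<Longrightarrow> \<psi> differentiable (at x) \<and> deriv \<psi> differentiable (at x)"
    and y: "y \<ge> 1"
  shows "(\<psi> has_real_derivative deriv \<psi> y) (at y)" "(deriv \<psi> has_real_derivative deriv (deriv \<psi>) y) (at y)"
proof -
  have "y \<in> U" using U y by auto
  then show "(\<psi> has_real_derivative deriv \<psi> y) (at y)" "(deriv \<psi> has_real_derivative deriv (deriv \<psi>) y) (at y)"
    using U(3) DERIV_deriv_iff_real_differentiable by blast+
qed

lemma f_derivs:
  fixes f \<psi> :: "real \<Rightarrow> real"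
  assumes fx: "\<And>x. x \<ge> 1 \<Longrightarrow> f x = - lam * (x - 1) powr \<alpha> + \<psi> x"
    and U: "open U" "{1..} \<subseteq> U" "\<And>x. x \<in> U \<Longrightarrow> \<psi> differentiable (at x) \<and> deriv \<psi> differentiable (at x)"
    and x: "x > 1"
  shows "(f has_real_derivative deriv f x) (at x)" "(deriv f has_real_derivative deriv (deriv f) x) (at x)"
proof -
  define p where "p y = - lam * (y - 1) powr \<alpha> + \<psi> y" for y
  define p' where "p' y = - lam * (\<alpha> * (y-1) powr (\<alpha>-1)) + deriv \<psi> y" for y
  define p'' where "p'' y = - lam * (\<alpha> * ((\<alpha>-1) * (y-1) powr (\<alpha>-1-1))) + deriv (deriv \<psi>) y" for y
  have dp: "(p has_real_derivative p' y) (at y)" if "y > 1" for y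
  proof -
    have "((\<lambda>y. (y-1) powr \<alpha>) has_real_derivative \<alpha> * (y-1) powr (\<alpha>-1) * 1) (at y)"
      by (rule DERIV_chain2[OF has_real_derivative_powr]) (use that in \<open>auto intro!: derivative_eq_intros\<close>)
    hence "((\<lambda>y. (y-1) powr \<alpha>) has_real_derivative \<alpha> * (y-1) powr (\<alpha>-1)) (at y)" by simp
    then show ?thesis unfolding p_def[abs_def] p'_def
      using psi_derivs(1)[OF U, of y] that by (intro DERIV_add DERIV_cmult) auto
  qed
  have dfy: "(f has_real_derivative p' y) (at y)" if "y > 1" for y
    by (rule has_field_derivative_transform_within_open[OF dp[OF that], of "{1<..}"]) (use that fx in \<open>auto simp: p_def\<close>)
  have deq: "deriv f y = p' y" if "y > 1" for y using dfy[OF that] by (rule DERIV_imp_deriv)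
  have dp': "(p' has_real_derivative p'' y) (at y)" if "y > 1" for y
  proof -
    have "((\<lambda>y. (y-1) powr (\<alpha>-1)) has_real_derivative (\<alpha>-1) * (y-1) powr (\<alpha>-1-1) * 1) (at y)"
      by (rule DERIV_chain2[OF has_real_derivative_powr]) (use that in \<open>auto intro!: derivative_eq_intros\<close>)
    hence d: "((\<lambda>y. (y-1) powr (\<alpha>-1)) has_real_derivative (\<alpha>-1) * (y-1) powr (\<alpha>-1-1)) (at y)"
      by (simp only: mult_1_right)
    have "((\<lambda>y. - lam * (\<alpha> * (y-1) powr (\<alpha>-1))) has_real_derivative - lam * (\<alpha> * ((\<alpha>-1) * (y-1) powr (\<alpha>-1-1)))) (at y)"
      by (intro DERIV_cmult d)
    then show ?thesis unfolding p'_def[abs_def] p''_def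
      using psi_derivs(2)[OF U, of y] that by (intro DERIV_add) auto
  qed
  have dfy': "(deriv f has_real_derivative p'' y) (at y)" if "y > 1" for y
    by (rule has_field_derivative_transform_within_open[OF dp'[OF that], of "{1<..}"]) (use that deq in auto)
  have deq': "deriv (deriv f) y = p'' y" if "y > 1" for y using dfy'[OF that] by (rule DERIV_imp_deriv)
  show "(f has_real_derivative deriv f x) (at x)" using dfy[OF x] deq[OF x] by simp
  show "(deriv f has_real_derivative deriv (deriv f) x) (at x)" using dfy'[OF x] deq'[OF x] by simp
qed

lemma E_bound:
  fixes \<psi> :: "real \<Rightarrow> real"
  assumes U: "open U" "{1..} \<subseteq> U" "\<And>x. x \<in> U \<Longrightarrow> \<psi> differentiable (at x) \<and> deriv \<psi> differentiable (at x)"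
    and Cb: "\<And>x. x > 1 \<Longrightarrow> \<bar>deriv \<psi> x\<bar> \<le> C * x powr (\<alpha> - 1) \<and> \<bar>deriv (deriv \<psi>) x\<bar> \<le> C * x powr (-1) * (x - 1) powr (\<alpha> - 1)"
    and a1: "\<alpha> \<ge> 1 \<Longrightarrow> deriv \<psi> 1 = \<beta> * \<psi> 1"
    and ap: "\<alpha> > 0" and a2: "\<alpha> < 2" and b0: "\<beta> > 0" and b1: "\<beta> < 1"
  shows "\<exists>K \<delta>. K \<ge> 0 \<and> \<delta> > 0 \<and> (\<forall>h. 0 < h \<longrightarrow> h \<le> 1 \<longrightarrow>
     \<bar>\<psi> 1 * ((1+h) powr (2*\<beta>) - 1) - 2 * (\<psi> (1+h) - \<psi> 1)\<bar> \<le> K * h powr \<delta> * h powr \<alpha>)"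
proof -
  have C: "C \<ge> 0"
  proof -
    have "0 \<le> \<bar>deriv \<psi> 2\<bar>" by simp
    also have "\<dots> \<le> C * 2 powr (\<alpha> - 1)" using Cb[of 2] by simp
    finally show ?thesis by (simp add: zero_le_mult_iff)
  qed
  have dpsi: "(\<psi> has_real_derivative deriv \<psi> y) (at y)" "(deriv \<psi> has_real_derivative deriv (deriv \<psi>) y) (at y)"
    if "y \<ge> 1" for y using psi_derivs[OF U that] by auto
  have dpow: "((\<lambda>y. y powr (2*\<beta>)) has_real_derivative (2*\<beta>) * y powr (2*\<beta> - 1)) (at y)" if "y \<ge> 1" for y
    using that by (intro has_real_derivative_powr) auto
  show ?thesis
  proof (cases "\<alpha> < 1")
    case True
    show ?thesis
    proof (intro exI conjI allI impI)
      show "4 * \<bar>\<psi> 1\<bar> + 2 * C \<ge> 0" using C by simp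
      show "1 - \<alpha> > 0" using True by simp
      fix h :: real assume h: "0 < h" "h \<le> 1"
      obtain z where z: "1 < z" "z < 1+h" "\<psi> (1+h) - \<psi> 1 = (1+h-1) * deriv \<psi> z"
        using MVT2[of 1 "1+h" \<psi> "deriv \<psi>"] h dpsi(1) by auto
      have "\<bar>deriv \<psi> z\<bar> \<le> C * z powr (\<alpha> - 1)" using Cb z by simp
      also have "\<dots> \<le> C * 1"
      proof -
        have "z powr (\<alpha> - 1) \<le> 1 powr (\<alpha> - 1)" using z True by (intro powr_mono2') auto
        then show ?thesis using C by (intro mult_left_mono) auto
      qed
      finally have p1: "\<bar>\<psi> (1+h) - \<psi> 1\<bar> \<le> C * h" using z(3) h by (simp add: abs_mult mult.commute)
      obtain w where w: "1 < w" "w < 1+h" "(1+h) powr (2*\<beta>) - 1 powr (2*\<beta>) = (1+h-1) * ((2*\<beta>) * w powr (2*\<beta> - 1))"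
        using MVT2[of 1 "1+h" "\<lambda>y. y powr (2*\<beta>)" "\<lambda>y. (2*\<beta>) * y powr (2*\<beta> - 1)"] h dpow by auto
      have "w powr (2*\<beta> - 1) \<le> w powr 1" using w b1 by (intro powr_mono) auto
      also have "\<dots> \<le> 2" using w h by simp
      finally have "w powr (2*\<beta> - 1) \<le> 2" .
      hence "(2*\<beta>) * w powr (2*\<beta> - 1) \<le> 2 * 2" using b0 b1 by (intro mult_mono) auto
      hence p2: "\<bar>(1+h) powr (2*\<beta>) - 1\<bar> \<le> 4 * h" using w(3) h b0
        by (simp add: abs_mult mult.commute)
      have "\<bar>\<psi> 1 * ((1+h) powr (2*\<beta>) - 1) - 2 * (\<psi> (1+h) - \<psi> 1)\<bar> \<le> \<bar>\<psi> 1\<bar> * \<bar>(1+h) powr (2*\<beta>) - 1\<bar> + 2 * \<bar>\<psi> (1+h) - \<psi> 1\<bar>"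
        by (rule order_trans[OF abs_triangle_ineq4], subst abs_mult, subst abs_mult, simp)
      also have "\<dots> \<le> \<bar>\<psi> 1\<bar> * (4 * h) + 2 * (C * h)"
        using p1 p2 by (intro add_mono mult_left_mono) auto
      also have "\<dots> = (4 * \<bar>\<psi> 1\<bar> + 2 * C) * h" by (simp add: algebra_simps)
      also have "\<dots> = (4 * \<bar>\<psi> 1\<bar> + 2 * C) * h powr (1 - \<alpha>) * h powr \<alpha>"
      proof -
        have "h = h powr (1 - \<alpha>) * h powr \<alpha>" using h by (simp add: powr_add[symmetric])
        then show ?thesis by (metis mult.assoc)
      qed
      finally show "\<bar>\<psi> 1 * ((1+h) powr (2*\<beta>) - 1) - 2 * (\<psi> (1+h) - \<psi> 1)\<bar> \<le> (4 * \<bar>\<psi> 1\<bar> + 2 * C) * h powr (1 - \<alpha>) * h powr \<alpha>" .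
    qed
  next
    case False
    hence a1': "\<alpha> \<ge> 1" by simp
    show ?thesis
    proof (intro exI conjI allI impI)
      show "2 * \<bar>\<psi> 1\<bar> + 2 * C \<ge> 0" using C by simp
      show "min 1 (2 - \<alpha>) > 0" using a2 by simp
      fix h :: real assume h: "0 < h" "h \<le> 1"
      obtain z1 z2 where z: "1 < z2" "z2 < z1" "z1 < 1+h"
        "\<psi> (1+h) - \<psi> 1 - deriv \<psi> 1 * h = h * (z1 - 1) * deriv (deriv \<psi>) z2"
        using taylor2[of h \<psi> "deriv \<psi>" "deriv (deriv \<psi>)"] h dpsi by blast
      have "\<bar>deriv (deriv \<psi>) z2\<bar> \<le> C * z2 powr (-1) * (z2 - 1) powr (\<alpha> - 1)" using Cb z by simp
      also have "\<dots> \<le> C * 1 * h powr (\<alpha> - 1)"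
      proof -
        have "z2 powr (-1) \<le> 1 powr (-1)" using z by (intro powr_mono2') auto
        moreover have "(z2 - 1) powr (\<alpha> - 1) \<le> h powr (\<alpha> - 1)" using z a1' by (intro powr_mono2) auto
        ultimately show ?thesis using C by (intro mult_mono mult_left_mono) auto
      qed
      finally have dd: "\<bar>deriv (deriv \<psi>) z2\<bar> \<le> C * h powr (\<alpha> - 1)" by simp
      have "\<bar>\<psi> (1+h) - \<psi> 1 - deriv \<psi> 1 * h\<bar> = h * (z1 - 1) * \<bar>deriv (deriv \<psi>) z2\<bar>"
        using z h by (simp add: abs_mult)
      also have "\<dots> \<le> h * h * (C * h powr (\<alpha> - 1))"
        using z h dd by (intro mult_mono) auto
      finally have q1: "\<bar>\<psi> (1+h) - \<psi> 1 - \<beta> * \<psi> 1 * h\<bar> \<le> h * h * (C * h powr (\<alpha> - 1))"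
        using a1[OF a1'] by simp
      define F2 where "F2 y = (2*\<beta>) * ((2*\<beta> - 1) * y powr (2*\<beta> - 1 - 1))" for y
      have dpow2: "((\<lambda>y. (2*\<beta>) * y powr (2*\<beta> - 1)) has_real_derivative F2 y) (at y)" if "y \<ge> 1" for y
        unfolding F2_def using that by (intro DERIV_cmult has_real_derivative_powr) auto
      obtain w1 w2 where w: "1 < w2" "w2 < w1" "w1 < 1+h"
        "(1+h) powr (2*\<beta>) - 1 powr (2*\<beta>) - (2*\<beta>) * 1 powr (2*\<beta> - 1) * h = h * (w1 - 1) * F2 w2"
        using taylor2[of h "\<lambda>y. y powr (2*\<beta>)" "\<lambda>y. (2*\<beta>) * y powr (2*\<beta> - 1)" F2] h dpow dpow2 by blast
      have "\<bar>F2 w2\<bar> \<le> 2"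
      proof -
        have "w2 powr (2*\<beta> - 1 - 1) \<le> 1 powr (2*\<beta> - 1 - 1)" using w b1 by (intro powr_mono2') auto
        hence "w2 powr (2*\<beta> - 1 - 1) \<le> 1" by simp
        moreover have "\<bar>2*\<beta> - 1\<bar> \<le> 1" using b0 b1 by simp
        moreover have "2*\<beta> \<le> 2" using b1 by simp
        ultimately have "(2*\<beta>) * (\<bar>2*\<beta> - 1\<bar> * w2 powr (2*\<beta> - 1 - 1)) \<le> 2 * (1 * 1)"
          using b0 by (intro mult_mono) auto
        then show ?thesis unfolding F2_def using b0 by (simp add: abs_mult)
      qed
      have q2: "\<bar>(1+h) powr (2*\<beta>) - 1 - 2*\<beta>*h\<bar> \<le> h * h * 2"
      proof -
        have "\<bar>(1+h) powr (2*\<beta>) - 1 - 2*\<beta>*h\<bar> = h * (w1 - 1) * \<bar>F2 w2\<bar>" using w h by (simp add: abs_mult)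
        also have "\<dots> \<le> h * h * 2" using w h \<open>\<bar>F2 w2\<bar> \<le> 2\<close> by (intro mult_mono) auto
        finally show ?thesis .
      qed
      have Eeq: "\<psi> 1 * ((1+h) powr (2*\<beta>) - 1) - 2 * (\<psi> (1+h) - \<psi> 1)
          = \<psi> 1 * ((1+h) powr (2*\<beta>) - 1 - 2*\<beta>*h) - 2 * (\<psi> (1+h) - \<psi> 1 - \<beta> * \<psi> 1 * h)"
        by (simp add: algebra_simps)
      have "\<bar>\<psi> 1 * ((1+h) powr (2*\<beta>) - 1) - 2 * (\<psi> (1+h) - \<psi> 1)\<bar>
          \<le> \<bar>\<psi> 1\<bar> * \<bar>(1+h) powr (2*\<beta>) - 1 - 2*\<beta>*h\<bar> + 2 * \<bar>\<psi> (1+h) - \<psi> 1 - \<beta> * \<psi> 1 * h\<bar>"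
        unfolding Eeq by (rule order_trans[OF abs_triangle_ineq4], subst abs_mult, subst abs_mult, simp)
      also have "\<dots> \<le> \<bar>\<psi> 1\<bar> * (h * h * 2) + 2 * (h * h * (C * h powr (\<alpha> - 1)))"
        using q1 q2 by (intro add_mono mult_left_mono) auto
      also have "\<dots> = 2 * \<bar>\<psi> 1\<bar> * h powr (2 - \<alpha>) * h powr \<alpha> + 2 * C * h * h powr \<alpha>"
      proof -
        have e1: "h * h = h powr (2 - \<alpha>) * h powr \<alpha>" using h by (simp add: powr_add[symmetric] power2_eq_square[symmetric])
        have e2: "h * h * h powr (\<alpha> - 1) = h * h powr \<alpha>" using h by (simp add: powr_diff)
        show ?thesis using e1 e2 by (simp add: algebra_simps)
      qed
      also have "\<dots> \<le> 2 * \<bar>\<psi> 1\<bar> * h powr (min 1 (2 - \<alpha>)) * h powr \<alpha> + 2 * C * h powr (min 1 (2 - \<alpha>)) * h powr \<alpha>"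
      proof -
        have "h powr (2 - \<alpha>) \<le> h powr (min 1 (2 - \<alpha>))" using h by (intro powr_mono') auto
        moreover have "h \<le> h powr (min 1 (2 - \<alpha>))"
        proof -
          have "h powr 1 \<le> h powr (min 1 (2 - \<alpha>))" using h by (intro powr_mono') auto
          then show ?thesis using h by simp
        qed
        ultimately show ?thesis using C by (intro add_mono mult_right_mono mult_left_mono) auto
      qed
      also have "\<dots> = (2 * \<bar>\<psi> 1\<bar> + 2 * C) * h powr (min 1 (2 - \<alpha>)) * h powr \<alpha>" by (simp add: algebra_simps)
      finally show "\<bar>\<psi> 1 * ((1+h) powr (2*\<beta>) - 1) - 2 * (\<psi> (1+h) - \<psi> 1)\<bar> \<le> (2 * \<bar>\<psi> 1\<bar> + 2 * C) * h powr (min 1 (2 - \<alpha>)) * h powr \<alpha>" .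
    qed
  qed
qed

lemma g_lower:
  fixes f \<psi> :: "real \<Rightarrow> real"
  assumes fx: "\<And>x. x \<ge> 1 \<Longrightarrow> f x = - lam * (x - 1) powr \<alpha> + \<psi> x"
    and U: "open U" "{1..} \<subseteq> U" "\<And>x. x \<in> U \<Longrightarrow> \<psi> differentiable (at x) \<and> deriv \<psi> differentiable (at x)"
    and Cb: "\<And>x. x > 1 \<Longrightarrow> \<bar>deriv \<psi> x\<bar> \<le> C * x powr (\<alpha> - 1) \<and> \<bar>deriv (deriv \<psi>) x\<bar> \<le> C * x powr (-1) * (x - 1) powr (\<alpha> - 1)"
    and a1: "\<alpha> \<ge> 1 \<Longrightarrow> deriv \<psi> 1 = \<beta> * \<psi> 1"
    and ap: "\<alpha> > 0" and a2: "\<alpha> < 2" and b0: "\<beta> > 0" and b1: "\<beta> < 1" and lam: "lam > 0"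
  shows "\<exists>h0. 0 < h0 \<and> h0 \<le> 1 \<and> (\<forall>h. 0 < h \<and> h \<le> h0 \<longrightarrow>
     (1+h) powr (2*\<beta>) * f 1 - 2 * f (1+h) + f 1 \<ge> lam * h powr \<alpha>)"
proof -
  define E where "E h = \<psi> 1 * ((1+h) powr (2*\<beta>) - 1) - 2 * (\<psi> (1+h) - \<psi> 1)" for h
  obtain K \<delta> where Kd: "K \<ge> 0" "\<delta> > 0" "\<And>h. 0 < h \<Longrightarrow> h \<le> 1 \<Longrightarrow> \<bar>E h\<bar> \<le> K * h powr \<delta> * h powr \<alpha>"
    using E_bound[OF U Cb a1 ap a2 b0 b1] unfolding E_def by blast
  obtain h0 where h0: "0 < h0" "h0 \<le> 1" "\<And>h. 0 < h \<and> h \<le> h0 \<Longrightarrow> \<bar>E h\<bar> \<le> lam * h powr \<alpha>"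
    using choose_h0[OF Kd(1) Kd(2) lam, of E \<alpha>] Kd(3) by blast
  have "(1+h) powr (2*\<beta>) * f 1 - 2 * f (1+h) + f 1 \<ge> lam * h powr \<alpha>" if "0 < h" "h \<le> h0" for h
  proof -
    have f1: "f 1 = \<psi> 1" using fx[of 1] ap by simp
    have f2: "f (1+h) = - lam * h powr \<alpha> + \<psi> (1+h)" using fx[of "1+h"] that by simp
    have "(1+h) powr (2*\<beta>) * f 1 - 2 * f (1+h) + f 1 = 2 * lam * h powr \<alpha> + E h"
      unfolding f1 f2 E_def by (simp add: algebra_simps)
    moreover have "\<bar>E h\<bar> \<le> lam * h powr \<alpha>" using h0(3) that by blast
    ultimately show ?thesis by linarith
  qed
  then show ?thesis using h0 by blast
qed

lemma int1d:
  fixes N \<gamma> :: real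
  assumes N: "N \<ge> 0" and g: "\<gamma> < 1"
  shows "((\<lambda>x. (x+1) powr (-\<gamma>)) has_integral ((N+1) powr (1-\<gamma>) / (1-\<gamma>) - 1/(1-\<gamma>))) {0..N}"
proof -
  have "((\<lambda>x. (x+1) powr (-\<gamma>)) has_integral ((\<lambda>x. (x+1) powr (1-\<gamma>) / (1-\<gamma>)) N - (\<lambda>x. (x+1) powr (1-\<gamma>) / (1-\<gamma>)) 0)) {0..N}"
  proof (rule fundamental_theorem_of_calculus[OF N])
    fix x assume x: "x \<in> {0..N}"
    have "((\<lambda>x. (x+1) powr (1-\<gamma>)) has_real_derivative (1-\<gamma>) * (x+1) powr (1-\<gamma>-1) * 1) (at x)"
      by (rule DERIV_chain2[OF has_real_derivative_powr]) (use x in \<open>auto intro!: derivative_eq_intros\<close>)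
    hence "((\<lambda>x. (x+1) powr (1-\<gamma>) / (1-\<gamma>)) has_real_derivative (1-\<gamma>) * (x+1) powr (1-\<gamma>-1) * 1 / (1-\<gamma>)) (at x)"
      by (rule DERIV_cdivide)
    moreover have "(1-\<gamma>) * (x+1) powr (1-\<gamma>-1) * 1 / (1-\<gamma>) = (x+1) powr (-\<gamma>)" using g by simp
    ultimately have "((\<lambda>x. (x+1) powr (1-\<gamma>) / (1-\<gamma>)) has_real_derivative (x+1) powr (-\<gamma>)) (at x)" by simp
    then show "((\<lambda>x. (x+1) powr (1-\<gamma>) / (1-\<gamma>)) has_vector_derivative (x+1) powr (-\<gamma>)) (at x within {0..N})"
      by (simp add: has_real_derivative_iff_has_vector_derivative has_vector_derivative_at_within)
  qed
  then show ?thesis by simp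
qed

lemma box_integral_bound:
  fixes F :: "real \<times> real \<Rightarrow> real"
  assumes K: "K \<ge> 0" and g0: "\<gamma> \<ge> 0" and g1: "\<gamma> < 1" and N: "N \<ge> 0"
    and Fb: "\<And>s t. s \<ge> 0 \<Longrightarrow> t \<ge> 0 \<Longrightarrow> \<bar>F (s,t)\<bar> \<le> K * (s+1) powr (-\<gamma>) * (t+1) powr (-\<gamma>)"
  shows "\<bar>integral ({0..N} \<times> {0..N}) F\<bar> \<le> K * ((N+1) powr (1-\<gamma>) / (1-\<gamma>))^2"
proof -
  define G where "G x = K * (fst x + 1) powr (-\<gamma>) * (snd x + 1) powr (-\<gamma>)" for x :: "real \<times> real"
  define I where "I = (N+1) powr (1-\<gamma>) / (1-\<gamma>) - 1/(1-\<gamma>)"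
  have box: "{0..N} \<times> {0..N} = cbox (0::real,0::real) (N,N)" by (simp add: cbox_Pair_eq)
  have cont: "continuous_on (cbox (0::real,0::real) (N,N)) G"
  proof -
    have "\<forall>x\<in>cbox (0::real,0::real) (N,N). fst x + 1 \<noteq> 0 \<and> snd x + 1 \<noteq> 0"
      by (auto simp: cbox_Pair_eq)
    then show ?thesis unfolding G_def
      by (intro continuous_intros) auto
  qed
  have Gint: "G integrable_on ({0..N} \<times> {0..N})" unfolding box using cont by (rule integrable_continuous)
  have I1: "integral {0..N} (\<lambda>x. (x+1) powr (-\<gamma>)) = I" unfolding I_def using int1d[OF N g1] by (rule integral_unique)
  have "integral ({0..N} \<times> {0..N}) G = integral {0..N} (\<lambda>s. integral {0..N} (\<lambda>t. G (s,t)))"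
    unfolding box using integral_prod_continuous[OF cont] by simp
  also have "\<dots> = integral {0..N} (\<lambda>s. K * (s+1) powr (-\<gamma>) * I)"
  proof -
    have "integral {0..N} (\<lambda>t. G (s,t)) = K * (s+1) powr (-\<gamma>) * I" for s
      unfolding G_def using I1 by simp
    then show ?thesis by simp
  qed
  also have "\<dots> = K * I * I" using I1 by (simp add: mult_ac)
  finally have IG: "integral ({0..N} \<times> {0..N}) G = K * I * I" .
  have I0: "I \<ge> 0"
  proof -
    have "(N+1) powr (1-\<gamma>) \<ge> 1" using N g1 by (intro ge_one_powr_ge_zero) auto
    then show ?thesis unfolding I_def using g1 by (simp add: divide_right_mono)
  qed
  have Ib: "I \<le> (N+1) powr (1-\<gamma>) / (1-\<gamma>)" unfolding I_def using g1 by simp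
  have Gnn: "0 \<le> integral ({0..N} \<times> {0..N}) G" using IG I0 K by simp
  have "\<bar>integral ({0..N} \<times> {0..N}) F\<bar> \<le> integral ({0..N} \<times> {0..N}) G"
  proof (cases "F integrable_on ({0..N} \<times> {0..N})")
    case True
    have "norm (integral ({0..N} \<times> {0..N}) F) \<le> integral ({0..N} \<times> {0..N}) G"
      by (rule integral_norm_bound_integral[OF True Gint]) (auto simp: G_def intro!: Fb)
    then show ?thesis by simp
  next
    case False then show ?thesis using Gnn by (simp add: not_integrable_integral)
  qed
  also have "\<dots> = K * (I * I)" using IG by simp
  also have "\<dots> \<le> K * (((N+1) powr (1-\<gamma>) / (1-\<gamma>)) * ((N+1) powr (1-\<gamma>) / (1-\<gamma>)))"
    using I0 Ib K by (intro mult_left_mono mult_mono) auto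
  finally show ?thesis by (simp add: power2_eq_square)
qed

lemma inv_abs_ln: "((\<lambda>x::real. 1 / \<bar>ln x\<bar>) \<longlongrightarrow> 0) (at_right 0)"
proof -
  have "LIM x at_right (0::real). - ln x :> at_top"
    by (rule filterlim_compose[OF filterlim_uminus_at_top_at_bot ln_at_0])
  hence "((\<lambda>x. inverse (- ln x)) \<longlongrightarrow> 0) (at_right (0::real))" by (rule tendsto_inverse_0_at_top)
  moreover have "eventually (\<lambda>x. inverse (- ln x) = 1 / \<bar>ln x\<bar>) (at_right (0::real))"
  proof -
    have "eventually (\<lambda>x::real. 0 < x \<and> x < 1) (at_right 0)"
      by (intro eventually_conj eventually_at_right_less) (auto simp: eventually_at_right_field intro!: exI[of _ 1])
    then show ?thesis by eventually_elim (simp add: divide_inverse)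
  qed
  ultimately show ?thesis by (rule Lim_transform_eventually)
qed

lemma limit_part:
  fixes I :: "real \<Rightarrow> real"
  assumes T: "T > 0" and K: "K \<ge> 0" and g0: "1/2 \<le> \<gamma>" and g1: "\<gamma> < 1"
    and nc: "\<alpha> < 2 - 1 / real q \<Longrightarrow> \<gamma> > 1/2"
    and cr: "\<not> \<alpha> < 2 - 1 / real q \<Longrightarrow> \<gamma> = 1/2"
    and Ib: "\<And>\<epsilon>. 0 < \<epsilon> \<Longrightarrow> \<bar>I \<epsilon>\<bar> \<le> K * ((T/\<epsilon>+1) powr (1-\<gamma>) / (1-\<gamma>))^2"
  shows "((\<lambda>\<epsilon>. varphi_aq \<alpha> q \<epsilon> * I \<epsilon>) \<longlongrightarrow> 0) (at_right 0)"
proof -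
  define p where "p = 2 - 2*\<gamma>"
  define B where "B \<epsilon> = K / (1-\<gamma>)^2 * (varphi_aq \<alpha> q \<epsilon> * (2*T/\<epsilon>) powr p)" for \<epsilon>
  have ev: "eventually (\<lambda>\<epsilon>::real. 0 < \<epsilon> \<and> \<epsilon> < 1 \<and> \<epsilon> < T) (at_right 0)"
    unfolding eventually_at_right_field using T by (intro exI[of _ "min 1 T"]) auto
  have "eventually (\<lambda>\<epsilon>. norm (varphi_aq \<alpha> q \<epsilon> * I \<epsilon>) \<le> B \<epsilon>) (at_right 0)"
    using ev
  proof eventually_elim
    case (elim \<epsilon>)
    have "0 \<le> \<epsilon> / \<bar>ln \<epsilon>\<bar>" using elim by (intro divide_nonneg_nonneg) auto
    then have vp: "varphi_aq \<alpha> q \<epsilon> \<ge> 0" using elim unfolding varphi_aq_def by auto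
    have sq: "((T/\<epsilon>+1) powr (1-\<gamma>) / (1-\<gamma>))^2 = (T/\<epsilon>+1) powr p / (1-\<gamma>)^2"
    proof -
      have "((T/\<epsilon>+1) powr (1-\<gamma>))^2 = (T/\<epsilon>+1) powr p"
      proof -
        have "T/\<epsilon> + 1 \<noteq> 0" using elim T by (smt (verit) divide_pos_pos)
        then show ?thesis unfolding p_def by (subst powr_power) (auto simp: algebra_simps)
      qed
      then show ?thesis by (simp add: power_divide)
    qed
    have "(T/\<epsilon>+1) powr p \<le> (2*T/\<epsilon>) powr p"
    proof -
      have "1 \<le> T/\<epsilon>" using elim by simp
      then have "T/\<epsilon>+1 \<le> 2*T/\<epsilon>" by simp
      then show ?thesis using elim T g1 unfolding p_def by (intro powr_mono2) auto
    qed
    have "norm (varphi_aq \<alpha> q \<epsilon> * I \<epsilon>) = varphi_aq \<alpha> q \<epsilon> * \<bar>I \<epsilon>\<bar>" using vp by (simp add: abs_mult)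
    also have "\<dots> \<le> varphi_aq \<alpha> q \<epsilon> * (K * ((T/\<epsilon>+1) powr p / (1-\<gamma>)^2))"
      using Ib[of \<epsilon>] elim vp sq by (intro mult_left_mono) auto
    also have "\<dots> \<le> varphi_aq \<alpha> q \<epsilon> * (K * ((2*T/\<epsilon>) powr p / (1-\<gamma>)^2))"
      using \<open>(T/\<epsilon>+1) powr p \<le> (2*T/\<epsilon>) powr p\<close> vp K
      by (intro mult_left_mono divide_right_mono) auto
    also have "\<dots> = B \<epsilon>" unfolding B_def by simp
    finally show ?case .
  qed
  moreover have "(B \<longlongrightarrow> 0) (at_right 0)"
  proof (cases "\<alpha> < 2 - 1 / real q")
    case True
    have gp: "2*\<gamma> - 1 > 0" using nc[OF True] by simp
    have "((\<lambda>\<epsilon>::real. \<epsilon> powr (2*\<gamma> - 1)) \<longlongrightarrow> 0) (at_right 0)"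
      by (rule tendsto_zero_powrI[OF _ tendsto_const _ gp])
         (auto simp: eventually_at_right_field intro!: exI[of _ 1] tendsto_ident_at)
    hence "((\<lambda>\<epsilon>::real. K / (1-\<gamma>)^2 * ((2*T) powr p * \<epsilon> powr (2*\<gamma> - 1))) \<longlongrightarrow> 0) (at_right 0)"
      by (intro tendsto_mult_right_zero)
    moreover have "eventually (\<lambda>\<epsilon>. K / (1-\<gamma>)^2 * ((2*T) powr p * \<epsilon> powr (2*\<gamma> - 1)) = B \<epsilon>) (at_right 0)"
      using ev
    proof eventually_elim
      case (elim \<epsilon>)
      have "\<epsilon> * (2*T/\<epsilon>) powr p = (2*T) powr p * \<epsilon> powr (2*\<gamma> - 1)"
      proof -
        have "(2*T/\<epsilon>) powr p = (2*T) powr p / \<epsilon> powr p" using elim T by (simp add: powr_divide)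
        moreover have "\<epsilon> powr (2*\<gamma> - 1) = \<epsilon> / \<epsilon> powr p"
        proof -
          have "\<epsilon> powr (2*\<gamma> - 1) = \<epsilon> powr (1 - p)" by (rule arg_cong[where f="\<lambda>x. \<epsilon> powr x"]) (simp add: p_def)
          also have "\<dots> = \<epsilon> powr 1 / \<epsilon> powr p" by (rule powr_diff)
          finally show ?thesis using elim by simp
        qed
        ultimately show ?thesis by simp
      qed
      then show ?case unfolding B_def varphi_aq_def using True by simp
    qed
    ultimately show ?thesis by (rule Lim_transform_eventually)
  next
    case False
    have g: "\<gamma> = 1/2" using cr[OF False] .
    have "((\<lambda>\<epsilon>::real. K / (1-\<gamma>)^2 * (2*T * (1 / \<bar>ln \<epsilon>\<bar>))) \<longlongrightarrow> 0) (at_right 0)"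
      by (intro tendsto_mult_right_zero inv_abs_ln)
    moreover have "eventually (\<lambda>\<epsilon>. K / (1-\<gamma>)^2 * (2*T * (1 / \<bar>ln \<epsilon>\<bar>)) = B \<epsilon>) (at_right 0)"
      using ev
    proof eventually_elim
      case (elim \<epsilon>)
      have "p = 1" unfolding p_def g by simp
      then show ?case unfolding B_def varphi_aq_def using False elim T by simp
    qed
    ultimately show ?thesis by (rule Lim_transform_eventually)
  qed
  ultimately show ?thesis by (rule Lim_null_comparison)
qed

lemma pow_shape:
  fixes x y a b \<gamma> :: real
  assumes x: "1 \<le> x" "x \<le> y" and ab: "a - b \<le> -2*\<gamma>" and b: "2*\<gamma> \<le> b" and g: "\<gamma> \<ge> 0"
  shows "x powr a * y powr (-b) \<le> x powr (-\<gamma>) * y powr (-\<gamma>)"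
proof -
  have y1: "y \<ge> 1" using x by simp
  have fin: "y powr (-2*\<gamma>) \<le> x powr (-\<gamma>) * y powr (-\<gamma>)"
  proof -
    have "y powr (-2*\<gamma>) = y powr (-\<gamma>) * y powr (-\<gamma>)" by (simp add: powr_add[symmetric])
    also have "\<dots> \<le> x powr (-\<gamma>) * y powr (-\<gamma>)"
      using x g by (intro mult_right_mono powr_mono2') auto
    finally show ?thesis .
  qed
  show ?thesis
  proof (cases "a \<ge> 0")
    case True
    have "x powr a * y powr (-b) \<le> y powr a * y powr (-b)"
      using x True by (intro mult_right_mono powr_mono2) auto
    also have "\<dots> = y powr (a - b)" by (simp add: powr_add[symmetric])
    also have "\<dots> \<le> y powr (-2*\<gamma>)" using y1 ab by (intro powr_mono) auto
    finally show ?thesis using fin by linarith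
  next
    case False
    have "x powr a \<le> x powr 0" using x False by (intro powr_mono) auto
    hence "x powr a \<le> 1" using x by simp
    hence "x powr a * y powr (-b) \<le> 1 * y powr (-b)" by (intro mult_right_mono) auto
    also have "\<dots> \<le> y powr (-2*\<gamma>)" using y1 b by (simp add: powr_mono)
    finally show ?thesis using fin by linarith
  qed
qed

lemma diff_lower:
  fixes u \<beta> :: real
  assumes u: "u \<ge> 0" and b: "0 < \<beta>" "\<beta> < 1"
  shows "(u+1) powr \<beta> - u powr \<beta> \<ge> \<beta> * (u+1) powr (\<beta> - 1)"
proof -
  have cont: "continuous_on {u..u+1} (\<lambda>x. x powr \<beta>)"
    using u b by (intro continuous_on_powr' continuous_intros) auto
  have dif: "(\<lambda>x. x powr \<beta>) differentiable (at x)" if "u < x" "x < u+1" for x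
    using has_real_derivative_powr[of x \<beta>] that u real_differentiable_def by force
  obtain l z where lz: "u < z" "z < u+1" "((\<lambda>x. x powr \<beta>) has_real_derivative l) (at z)"
    "(u+1) powr \<beta> - u powr \<beta> = (u+1-u) * l"
    using MVT[OF _ cont dif] by auto
  have "l = \<beta> * z powr (\<beta> - 1)"
    using DERIV_unique[OF lz(3) has_real_derivative_powr[of z \<beta>]] lz u by simp
  moreover have "z powr (\<beta> - 1) \<ge> (u+1) powr (\<beta> - 1)" using lz u b by (intro powr_mono2') auto
  ultimately show ?thesis using lz(4) b by simp
qed


theorem lemma6p1:
  fixes M :: "'a measure" and X :: "real \<Rightarrow> 'a \<Rightarrow> real"
    and \<beta> \<alpha> lam c \<nu> T :: real and \<psi> :: "real \<Rightarrow> real" and q :: nat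
  assumes "centered_gaussian_process M X"
    and "self_similar M X \<beta>"
    and "0 < \<beta>" and "\<beta> < 1"
    and "H1 M X \<beta> \<alpha> lam \<psi>"
    and "H2 M X \<alpha> c \<nu>"
    and "q \<ge> 1" and "\<alpha> \<le> 2 - 1 / real q"
    and "T > 0"
  shows "((\<lambda>\<epsilon>. varphi_aq \<alpha> q \<epsilon> *
            integral ({0..T/\<epsilon>} \<times> {0..T/\<epsilon>})
              (\<lambda>(s, t). indicator (D2 c) (s, t) * \<bar>Phi M X s t\<bar> ^ q))
          \<longlongrightarrow> 0) (at_right 0)"
proof -
  interpret ssproc M X \<beta> using assms(1-3) by unfold_locales
  define f where "f = cov_phi M X"
  have b0: "0 < \<beta>" and b1: "\<beta> < 1" using assms by auto
  have ap: "0 < \<alpha>" and a2b: "\<alpha> \<le> 2*\<beta>" and lam: "lam > 0"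
    and fx: "\<And>x. x \<ge> 1 \<Longrightarrow> f x = - lam * (x - 1) powr \<alpha> + \<psi> x"
    using assms(5) unfolding H1_def f_def by auto
  obtain U where U: "open U" "{1..} \<subseteq> U" "\<And>x. x \<in> U \<Longrightarrow> \<psi> differentiable (at x) \<and> deriv \<psi> differentiable (at x)"
    using assms(5) unfolding H1_def by auto
  obtain C0 where C0: "\<And>x. x > 1 \<Longrightarrow> \<bar>deriv \<psi> x\<bar> \<le> C0 * x powr (\<alpha> - 1) \<and> \<bar>deriv (deriv \<psi>) x\<bar> \<le> C0 * x powr (-1) * (x - 1) powr (\<alpha> - 1)"
    using assms(5) unfolding H1_def by auto
  have a1: "\<alpha> \<ge> 1 \<Longrightarrow> deriv \<psi> 1 = \<beta> * \<psi> 1" using assms(5) unfolding H1_def by auto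
  have c1: "c > 1" and nu1: "1 < \<nu>" using assms(6) unfolding H2_def by auto
  obtain C2 where C2: "\<And>x. x \<ge> c \<Longrightarrow> (\<alpha> < 1 \<longrightarrow> \<bar>deriv f x\<bar> \<le> C2 * x powr (-\<nu>) \<and>
                   \<bar>deriv (deriv f) x\<bar> \<le> C2 * x powr (-\<nu> - 1)) \<and>
        (\<alpha> \<ge> 1 \<longrightarrow> \<bar>deriv f x\<bar> \<le> C2 * x powr (\<alpha> - 2) \<and>
                   \<bar>deriv (deriv f) x\<bar> \<le> C2 * x powr (\<alpha> - 3))"
    using assms(6) unfolding H2_def f_def by auto
  have a2: "\<alpha> < 2" using a2b b1 by simp
  have q1: "real q \<ge> 1" using assms(7) by simp
  have aq: "\<alpha> \<le> 2 - 1 / real q" by (rule assms(8))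
  define m where "m = (if \<alpha> < 1 then \<nu> else 2 - \<alpha>)"
  have m0: "m \<ge> 0" using nu1 a2 unfolding m_def by auto
  have em: "2*\<beta> - 1 + m \<ge> 0" using nu1 a2b b0 unfolding m_def by auto
  have bnd: "\<bar>deriv f x\<bar> \<le> C2 * x powr (-m) \<and> \<bar>deriv (deriv f) x\<bar> \<le> C2 * x powr (-m-1)" if "x \<ge> c" for x
  proof (cases "\<alpha> < 1")
    case True then show ?thesis using C2[OF that] unfolding m_def by simp
  next
    case False
    have e1: "-m = \<alpha> - 2" and e2: "-m-1 = \<alpha> - 3" using False unfolding m_def by auto
    show ?thesis unfolding e1 e2 using C2[OF that] False by simp
  qed
  have df: "(f has_real_derivative deriv f x) (at x)" and df1: "(deriv f has_real_derivative deriv (deriv f) x) (at x)"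
    if "x \<ge> c" for x using f_derivs[OF fx U] that c1 by auto
  obtain K1 where K1: "\<And>s t. s \<ge> 0 \<Longrightarrow> t \<ge> c*(s+1) \<Longrightarrow>
     \<bar>(s+1) powr (2*\<beta>) * f ((t+1)/(s+1)) - (s+1) powr (2*\<beta>) * f (t/(s+1)) - (s powr (2*\<beta>) * f ((t+1)/s) - s powr (2*\<beta>) * f (t/s))\<bar>
     \<le> K1 * (s+1) powr (2*\<beta>-2+m) * (t+1) powr (-m)"
    using delta_all[OF c1 df df1, of C2 m "2*\<beta>"] bnd m0 em by auto
  have Rf: "R a b = a powr (2*\<beta>) * f (b/a)" if "a \<ge> 0" "b \<ge> 0" for a b
    unfolding f_def using R_phi that by simp
  obtain a0 where a0: "a0 > 0" "\<And>u. u \<ge> 0 \<Longrightarrow> Q u \<ge> a0 * (u+1) powr (2*\<beta> - \<alpha>)"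
  proof -
    define p where "p = 2*\<beta> - \<alpha>"
    have p0: "p \<ge> 0" unfolding p_def using a2b by simp
    obtain h0 where h0: "0 < h0" "h0 \<le> 1" "\<And>h. 0 < h \<and> h \<le> h0 \<Longrightarrow> (1+h) powr (2*\<beta>) * f 1 - 2 * f (1+h) + f 1 \<ge> lam * h powr \<alpha>"
      using g_lower[OF fx U C0 a1 ap a2 b0 b1 lam] by blast
    have R11: "R 1 1 = f 1" using Rf[of 1 1] by simp
    have f1nn: "f 1 \<ge> 0" using R_nonneg[of 1] R11 by simp
    have f1p: "f 1 > 0"
    proof (rule ccontr)
      assume "\<not> f 1 > 0"
      hence f10: "f 1 = 0" using f1nn by simp
      have "(R 1 (1+h0))^2 \<le> R 1 1 * R (1+h0) (1+h0)" using R_CS[of 1 "1+h0"] h0 by simp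
      hence "(R 1 (1+h0))^2 \<le> 0" using R11 f10 by simp
      hence "R 1 (1+h0) = 0" by simp
      moreover have "R 1 (1+h0) = f (1+h0)" using Rf[of 1 "1+h0"] h0 by simp
      ultimately have "f (1+h0) = 0" by simp
      hence "lam * h0 powr \<alpha> \<le> 0" using h0(3)[of h0] h0 f10 by simp
      moreover have "lam * h0 powr \<alpha> > 0" using lam h0 by simp
      ultimately show False by simp
    qed
    define u0 where "u0 = max 1 (1/h0)"
    have u01: "u0 \<ge> 1" unfolding u0_def by simp
    define d0 where "d0 = sqrt (f 1) * (\<beta> * (u0+1) powr (\<beta> - 1))"
    have d0p: "d0 > 0" unfolding d0_def using f1p b0 u01 by simp
    define P0 where "P0 = (u0+1) powr p"
    have P0p: "P0 > 0" unfolding P0_def using u01 by simp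
    define a0 where "a0 = min (lam / 2 powr p) (d0^2 / P0)"
    have "a0 > 0" unfolding a0_def using lam d0p P0p by simp
    moreover have "Q u \<ge> a0 * (u+1) powr (2*\<beta> - \<alpha>)" if u: "u \<ge> 0" for u
    proof (cases "u \<ge> u0")
      case True
      have u1: "u \<ge> 1" using True u01 by simp
      have hu: "0 < 1/u" "1/u \<le> h0"
      proof -
        show "0 < 1/u" using u1 by simp
        have "1/h0 \<le> u" using True unfolding u0_def by simp
        then show "1/u \<le> h0" using h0 u1 by (simp add: field_simps)
      qed
      have Qeq: "Q u = u powr (2*\<beta>) * ((1 + 1/u) powr (2*\<beta>) * f 1 - 2 * f (1 + 1/u) + f 1)"
      proof -
        have e1: "(u+1) powr (2*\<beta>) = u powr (2*\<beta>) * (1 + 1/u) powr (2*\<beta>)"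
        proof -
          have "u + 1 = u * (1 + 1/u)" using u1 by (simp add: field_simps)
          then show ?thesis using u1 by (metis powr_mult le_add_same_cancel1 order.trans zero_le_one u zero_le_divide_1_iff)
        qed
        have e2: "(u+1)/u = 1 + 1/u" using u1 by (simp add: field_simps)
        show ?thesis unfolding Q_eq[OF u] using Rf[of "u+1" "u+1"] Rf[of u "u+1"] Rf[of u u] u1 e1 e2
          by (simp add: algebra_simps)
      qed
      have "Q u \<ge> u powr (2*\<beta>) * (lam * (1/u) powr \<alpha>)"
        unfolding Qeq using h0(3)[of "1/u"] hu by (intro mult_left_mono) auto
      moreover have "u powr (2*\<beta>) * (lam * (1/u) powr \<alpha>) = lam * u powr p"
        unfolding p_def using u1 by (simp add: powr_divide powr_diff)
      moreover have "u powr p \<ge> (u+1) powr p / 2 powr p"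
      proof -
        have "((u+1)/2) powr p \<le> u powr p" using u1 p0 by (intro powr_mono2) auto
        then show ?thesis using u1 by (simp add: powr_divide)
      qed
      ultimately have "Q u \<ge> lam / 2 powr p * (u+1) powr p" using lam
        by (smt (verit) mult_left_mono times_divide_eq_left times_divide_eq_right)
      moreover have "a0 * (u+1) powr p \<le> lam / 2 powr p * (u+1) powr p"
        unfolding a0_def by (intro mult_right_mono) auto
      ultimately show ?thesis unfolding p_def by simp
    next
      case False
      hence uu: "u \<le> u0" by simp
      have sq: "sqrt (x powr (2*\<beta>)) = x powr \<beta>" if "x \<ge> 0" for x
        using powr_half_sqrt_powr[of x "2*\<beta>"] that by simp
      have "Q u \<ge> (sqrt (R (u+1) (u+1)) - sqrt (R u u))^2" by (rule Q_ge[OF u])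
      also have "sqrt (R (u+1) (u+1)) - sqrt (R u u) = sqrt (f 1) * ((u+1) powr \<beta> - u powr \<beta>)"
      proof -
        have s1: "sqrt (R (u+1) (u+1)) = (u+1) powr \<beta> * sqrt (f 1)"
          using Rf[of "u+1" "u+1"] u sq[of "u+1"] by (simp add: real_sqrt_mult)
        have s2: "sqrt (R u u) = u powr \<beta> * sqrt (f 1)"
        proof (cases "u = 0")
          case True then show ?thesis using Rf[of u u] by simp
        next
          case False then show ?thesis using Rf[of u u] u sq[of u] by (simp add: real_sqrt_mult)
        qed
        show ?thesis unfolding s1 s2 by (simp add: algebra_simps)
      qed
      finally have Qd: "Q u \<ge> (sqrt (f 1) * ((u+1) powr \<beta> - u powr \<beta>))^2" .
      have "(u+1) powr \<beta> - u powr \<beta> \<ge> \<beta> * (u+1) powr (\<beta> - 1)" using diff_lower u b0 b1 by blast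
      moreover have "(u+1) powr (\<beta> - 1) \<ge> (u0+1) powr (\<beta> - 1)" using uu u b1 by (intro powr_mono2') auto
      ultimately have "(u+1) powr \<beta> - u powr \<beta> \<ge> \<beta> * (u0+1) powr (\<beta> - 1)" using b0
        by (smt (verit) mult_left_mono)
      hence "sqrt (f 1) * ((u+1) powr \<beta> - u powr \<beta>) \<ge> d0" unfolding d0_def
        using f1nn by (intro mult_left_mono) auto
      hence "(sqrt (f 1) * ((u+1) powr \<beta> - u powr \<beta>))^2 \<ge> d0^2" using d0p by (intro power_mono) auto
      hence Qd0: "Q u \<ge> d0^2" using Qd by simp
      have "(u+1) powr p \<le> P0" unfolding P0_def using uu u p0 by (intro powr_mono2) auto
      hence "a0 * (u+1) powr p \<le> d0^2 / P0 * P0"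
        unfolding a0_def using P0p d0p by (intro mult_mono) auto
      then show ?thesis using Qd0 P0p unfolding p_def by simp
    qed
    ultimately show ?thesis using that by blast
  qed
  define A where "A = 2*\<beta>-2+m - (2*\<beta> - \<alpha>)/2"
  define B where "B = m + (2*\<beta> - \<alpha>)/2"
  define K2 where "K2 = \<bar>K1\<bar> / a0"
  have Phib: "\<bar>Phi M X s t\<bar> \<le> K2 * (s+1) powr A * (t+1) powr (-B)" if st: "s \<ge> 0" "t \<ge> c*(s+1)" for s t
  proof -
    have "c*(s+1) > 0" using c1 st by simp
    hence t0: "t > 0" using st by linarith
    define p where "p = 2*\<beta> - \<alpha>"
    have sqQ: "sqrt (Q u) \<ge> sqrt a0 * (u+1) powr (p/2)" if "u \<ge> 0" for u
    proof -
      have "sqrt (a0 * (u+1) powr p) \<le> sqrt (Q u)" using a0(2)[OF that] unfolding p_def by simp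
      moreover have "sqrt (a0 * (u+1) powr p) = sqrt a0 * (u+1) powr (p/2)"
        using that by (simp add: real_sqrt_mult powr_half_sqrt_powr)
      ultimately show ?thesis by simp
    qed
    define D where "D = R (s+1) (t+1) - R (s+1) t - R s (t+1) + R s t"
    have "D = (s+1) powr (2*\<beta>) * f ((t+1)/(s+1)) - (s+1) powr (2*\<beta>) * f (t/(s+1)) - (s powr (2*\<beta>) * f ((t+1)/s) - s powr (2*\<beta>) * f (t/s))"
      unfolding D_def using st t0 by (simp add: Rf)
    hence Db: "\<bar>D\<bar> \<le> \<bar>K1\<bar> * ((s+1) powr (2*\<beta>-2+m) * (t+1) powr (-m))"
      using K1[OF st] by (smt (verit) mult.assoc mult_right_mono abs_ge_self powr_ge_zero zero_le_mult_iff)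
    have den: "sqrt a0 * (s+1) powr (p/2) * (sqrt a0 * (t+1) powr (p/2)) \<le> sqrt (Q s) * sqrt (Q t)"
      using sqQ[of s] sqQ[of t] st t0 Q_nonneg a0(1) by (intro mult_mono) auto
    have denp: "sqrt a0 * (s+1) powr (p/2) * (sqrt a0 * (t+1) powr (p/2)) > 0" using a0 st t0 by simp
    have "\<bar>Phi M X s t\<bar> = \<bar>D\<bar> / (sqrt (Q s) * sqrt (Q t))"
      unfolding Phi_eq[OF st(1) less_imp_le[OF t0]] D_def using Q_nonneg by (simp add: abs_divide abs_mult)
    also have "\<dots> \<le> (\<bar>K1\<bar> * ((s+1) powr (2*\<beta>-2+m) * (t+1) powr (-m))) / (sqrt a0 * (s+1) powr (p/2) * (sqrt a0 * (t+1) powr (p/2)))"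
      by (rule frac_le[OF _ Db denp den]) simp
    also have "\<dots> = \<bar>K1\<bar> / a0 * ((s+1) powr (2*\<beta>-2+m) / (s+1) powr (p/2)) * ((t+1) powr (-m) / (t+1) powr (p/2))"
      using a0 by (simp add: field_simps)
    also have "\<dots> = K2 * (s+1) powr A * (t+1) powr (-B)"
      unfolding K2_def A_def B_def p_def by (simp add: powr_diff[symmetric] algebra_simps)
    finally show ?thesis .
  qed
  define \<gamma> where "\<gamma> = min (3/4) (min (real q * (2-\<alpha>)/2) (real q * B/2))"
  have Bpos: "B \<ge> m" unfolding B_def using a2b by simp
  have qa: "real q * (2-\<alpha>) \<ge> 1"
  proof -
    have "1 / real q \<le> 2 - \<alpha>" using aq by simp
    hence "real q * (1 / real q) \<le> real q * (2 - \<alpha>)" using q1 by (intro mult_left_mono) auto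
    then show ?thesis using q1 by simp
  qed
  have qB: "real q * B \<ge> 1"
  proof (cases "\<alpha> < 1")
    case True
    have "1 * 1 \<le> real q * B" using q1 Bpos nu1 True unfolding m_def by (intro mult_mono) auto
    then show ?thesis by simp
  next
    case False
    have "real q * (2-\<alpha>) \<le> real q * B" using Bpos False q1 unfolding m_def by (intro mult_left_mono) auto
    then show ?thesis using qa by simp
  qed
  have g0: "1/2 \<le> \<gamma>" unfolding \<gamma>_def using qa qB by simp
  have g1: "\<gamma> < 1" unfolding \<gamma>_def by simp
  have nc: "\<gamma> > 1/2" if "\<alpha> < 2 - 1 / real q"
  proof -
    have "1 / real q < 2 - \<alpha>" using that by simp
    hence "real q * (1 / real q) < real q * (2 - \<alpha>)" using q1 by (intro mult_strict_left_mono) auto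
    hence qa': "real q * (2-\<alpha>) > 1" using q1 by simp
    have qB': "real q * B > 1"
    proof (cases "\<alpha> < 1")
      case True
      have "1 * 1 < real q * B" using q1 Bpos nu1 True unfolding m_def by (intro mult_le_less_imp_less) auto
      then show ?thesis by simp
    next
      case False
      have "real q * (2-\<alpha>) \<le> real q * B" using Bpos False q1 unfolding m_def by (intro mult_left_mono) auto
      then show ?thesis using qa' by simp
    qed
    show ?thesis unfolding \<gamma>_def using qa' qB' by simp
  qed
  have cr: "\<gamma> = 1/2" if "\<not> \<alpha> < 2 - 1 / real q"
  proof -
    have "\<alpha> = 2 - 1 / real q" using that aq by simp
    hence "real q * (2-\<alpha>) = 1" using q1 by simp
    then show ?thesis unfolding \<gamma>_def using qB by simp
  qed
  define K3 where "K3 = K2 ^ q"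
  have K2: "K2 \<ge> 0" unfolding K2_def using a0 by simp
  have Fb: "\<bar>(\<lambda>(s, t). indicator (D2 c) (s, t) * \<bar>Phi M X s t\<bar> ^ q) (s,t)\<bar> \<le> K3 * (s+1) powr (-\<gamma>) * (t+1) powr (-\<gamma>)"
    if "s \<ge> 0" "t \<ge> 0" for s t
  proof -
    have K3: "K3 \<ge> 0" unfolding K3_def using K2 by simp
    have key: "\<bar>Phi M X s t\<bar> ^ q \<le> K3 * (s+1) powr (-\<gamma>) * (t+1) powr (-\<gamma>)" if st: "s \<ge> 0" "t \<ge> c*(s+1)" for s t
    proof -
      have "c*(s+1) > 0" using c1 st by simp
      hence tp: "t + 1 > 0" "s + 1 > 0" using st by linarith+
      have "\<bar>Phi M X s t\<bar> ^ q \<le> (K2 * (s+1) powr A * (t+1) powr (-B)) ^ q"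
        using Phib[OF st] by (intro power_mono) auto
      also have "\<dots> = K3 * ((s+1) powr (real q * A) * (t+1) powr (- (real q * B)))"
      proof -
        have "((s+1) powr A) ^ q = (s+1) powr (real q * A)" using tp by (subst powr_power) auto
        moreover have "((t+1) powr (-B)) ^ q = (t+1) powr (- (real q * B))" using tp by (subst powr_power) auto
        ultimately show ?thesis unfolding K3_def by (simp add: power_mult_distrib)
      qed
      also have "\<dots> \<le> K3 * ((s+1) powr (-\<gamma>) * (t+1) powr (-\<gamma>))"
      proof (intro mult_left_mono pow_shape K3)
        show "1 \<le> s + 1" using st by simp
        have h1: "1 * (s+1) \<le> c * (s+1)" using c1 st by (intro mult_right_mono) auto
        have h2: "s + 1 \<le> c * (s+1)" using h1 by (simp only: mult_1_left)
        from h2 st(2) have "s + 1 \<le> t" by (rule order.trans)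
        then show "s + 1 \<le> t + 1" by simp
        have "A - B = \<alpha> - 2" unfolding A_def B_def by (simp add: algebra_simps)
        hence "real q * A - real q * B = - (real q * (2 - \<alpha>))"
        proof -
          assume ab: "A - B = \<alpha> - 2"
          have "real q * A - real q * B = real q * (A - B)" by (simp add: right_diff_distrib)
          also have "\<dots> = - (real q * (2 - \<alpha>))" unfolding ab by (simp add: right_diff_distrib)
          finally show ?thesis .
        qed
        moreover have "2*\<gamma> \<le> real q * (2 - \<alpha>)" unfolding \<gamma>_def by simp
        ultimately show "real q * A - real q * B \<le> -2*\<gamma>" by simp
        show "2*\<gamma> \<le> real q * B" unfolding \<gamma>_def by simp
        show "0 \<le> \<gamma>" using g0 by simp
      qed
      finally show ?thesis by (simp add: mult_ac)
    qed
    show ?thesis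
    proof (cases "(s,t) \<in> D2 c")
      case False then show ?thesis using K3 by simp
    next
      case True
      hence d: "\<bar>s - t\<bar> \<ge> (c - 1) * min s t + c" unfolding D2_def by simp
      have "\<bar>Phi M X s t\<bar> ^ q \<le> K3 * (s+1) powr (-\<gamma>) * (t+1) powr (-\<gamma>)"
      proof (cases "s \<le> t")
        case True
        hence "t - s \<ge> (c-1) * s + c" using d by (simp add: min_def)
        hence "t \<ge> c*(s+1)" by (simp add: algebra_simps)
        then show ?thesis using key that by simp
      next
        case False
        hence "s - t \<ge> (c-1) * t + c" using d by (simp add: min_def)
        hence "s \<ge> c*(t+1)" by (simp add: algebra_simps)
        hence "\<bar>Phi M X t s\<bar> ^ q \<le> K3 * (t+1) powr (-\<gamma>) * (s+1) powr (-\<gamma>)" using key that by simp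
        moreover have "Phi M X t s = Phi M X s t" unfolding Phi_def by (simp add: mult.commute)
        ultimately show ?thesis by (simp add: mult_ac)
      qed
      then show ?thesis using True by simp
    qed
  qed
  have Ib: "\<bar>integral ({0..T/\<epsilon>} \<times> {0..T/\<epsilon>}) (\<lambda>(s, t). indicator (D2 c) (s, t) * \<bar>Phi M X s t\<bar> ^ q)\<bar>
      \<le> K3 * ((T/\<epsilon>+1) powr (1-\<gamma>) / (1-\<gamma>))^2" if "0 < \<epsilon>" for \<epsilon>
    by (rule box_integral_bound) (use K2 g0 g1 that assms(9) Fb in \<open>auto simp: K3_def\<close>)
  show ?thesis
    by (rule limit_part[OF assms(9), of K3 \<gamma>]) (use K2 g0 g1 nc cr Ib in \<open>auto simp: K3_def\<close>)
qed

end
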